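(* The number $\zeta=2\cdot\sum_{l\geq 1}3^{-l!}$ belongs to the Cantor middle third set, and for every positive integer $k$: \begin{align*} \lambda_{k,j}(\zeta)&=\frac{1}{j-1}, \qquad 1\leq j\leq k+1,\\ \widehat{\lambda}_{k,1}(\zeta)&=\frac{1}{k},\\ \widehat{\lambda}_{k,j}(\zeta)&=0, \qquad 2\leq j\leq k+1. \end{align*}
   Context: The Cantor middle third set is the set of numbers in $[0,1]$ that admit a base-$3$ expansion without the digit $1$. For $\underline{\zeta}=(\zeta_1,\ldots,\zeta_k)\in\mathbb{R}^k$ and $1\leq j\leq k+1$, $\lambda_{k,j}(\underline{\zeta})$ (resp. $\widehat{\lambda}_{k,j}(\underline{\zeta})$) is the supremum of all $\eta\in\mathbb{R}$ such that the system $|x|\leq X$, $\max_{1\leq i\leq k}|\zeta_i x-y_i|\leq X^{-\eta}$ has at least $j$ linearly independent solutions $(x,y_1,\ldots,y_k)\in\mathbb{Z}^{k+1}$ for arbitrarily large real $X$ (resp. for all sufficiently large real $X$). For a real number $\zeta$ one writes $\lambda_{k,j}(\zeta):=\lambda_{k,j}(\zeta,\zeta^2,\ldots,\zeta^k)$ and $\widehat{\lambda}_{k,j}(\zeta):=\widehat{\lambda}_{k,j}(\zeta,\zeta^2,\ldots,\zeta^k)$. Convention: $1/0=\infty$. *)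

theory Defs
  imports "HOL-Analysis.Analysis" "HOL-Library.Extended_Real"
begin

definition cantor_set :: "real set" where
  "cantor_set = {x. 0 \<le> x \<and> x \<le> 1 \<and>
     (\<exists>d :: nat \<Rightarrow> nat. (\<forall>i. d i = 0 \<or> d i = 2) \<and>
        x = (\<Sum>i. real (d i) / 3 ^ (Suc i)))}"

text \<open>Integer points (x, y_1, ..., y_k) of Z^{k+1} are encoded as functions
  v :: nat => int with v 0 = x, v i = y_i (1 <= i <= k), v i = 0 for i > k.
  A real vector (zeta_1,...,zeta_k) is encoded as zeta :: nat => real (indices 1..k used).\<close>
definition approx_sol :: "nat \<Rightarrow> (nat \<Rightarrow> real) \<Rightarrow> real \<Rightarrow> real \<Rightarrow> (nat \<Rightarrow> int) \<Rightarrow> bool" where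
  "approx_sol k \<zeta> X \<eta> v \<longleftrightarrow> (\<forall>i>k. v i = 0) \<and> \<bar>real_of_int (v 0)\<bar> \<le> X \<and>
     (\<forall>i\<in>{1..k}. \<bar>\<zeta> i * of_int (v 0) - of_int (v i)\<bar> \<le> X powr (- \<eta>))"

definition lin_indep_int :: "nat \<Rightarrow> nat \<Rightarrow> (nat \<Rightarrow> nat \<Rightarrow> int) \<Rightarrow> bool" where
  "lin_indep_int k j V \<longleftrightarrow> (\<forall>c :: nat \<Rightarrow> real.
      (\<forall>t\<le>k. (\<Sum>m<j. c m * of_int (V m t)) = 0) \<longrightarrow> (\<forall>m<j. c m = 0))"

definition has_indep_sols :: "nat \<Rightarrow> nat \<Rightarrow> (nat \<Rightarrow> real) \<Rightarrow> real \<Rightarrow> real \<Rightarrow> bool" where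
  "has_indep_sols k j \<zeta> X \<eta> \<longleftrightarrow>
     (\<exists>V. (\<forall>m<j. approx_sol k \<zeta> X \<eta> (V m)) \<and> lin_indep_int k j V)"

definition lambda_kj :: "nat \<Rightarrow> nat \<Rightarrow> (nat \<Rightarrow> real) \<Rightarrow> ereal" where
  "lambda_kj k j \<zeta> = Sup {ereal \<eta> | \<eta>. \<exists>\<^sub>F X in at_top. has_indep_sols k j \<zeta> X \<eta>}"

definition lambda_hat_kj :: "nat \<Rightarrow> nat \<Rightarrow> (nat \<Rightarrow> real) \<Rightarrow> ereal" where
  "lambda_hat_kj k j \<zeta> = Sup {ereal \<eta> | \<eta>. \<forall>\<^sub>F X in at_top. has_indep_sols k j \<zeta> X \<eta>}"

definition veronese :: "real \<Rightarrow> nat \<Rightarrow> real" where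
  "veronese z = (\<lambda>i. z ^ i)"

end

theory Submission
  imports Defs "Jordan_Normal_Form.Determinant"
begin

definition ff :: "nat \<Rightarrow> real" where "ff l = 1 / 3 ^ fact (Suc l)"
definition qn :: "nat \<Rightarrow> nat" where "qn n = 3 ^ fact n"
definition pn :: "nat \<Rightarrow> nat" where "pn n = (\<Sum>l<n. 2 * 3 ^ (fact n - fact (Suc l)))"
definition zs :: "nat \<Rightarrow> real" where "zs n = 2 * (\<Sum>l<n. ff l)"


lemma ff_pos: "ff l > 0" by (simp add: ff_def)

lemma ff_le_geom: "ff l \<le> (1/3) ^ Suc l"
proof -
  have "Suc l \<le> fact (Suc l)" by (rule fact_ge_self)
  hence "(3::real) ^ Suc l \<le> 3 ^ fact (Suc l)" by (rule power_increasing) auto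
  thus ?thesis by (simp add: ff_def power_one_over divide_simps)
qed

lemma summable_ff: "summable ff"
proof (rule summable_comparison_test'[where N=0])
  show "summable (\<lambda>l. (1/3) * (1/3::real) ^ l)" by (intro summable_mult summable_geometric) simp
  fix l :: nat
  have "norm (ff l) = ff l" using ff_pos[of l] by simp
  also have "\<dots> \<le> (1/3) ^ Suc l" by (rule ff_le_geom)
  also have "\<dots> = (1/3) * (1/3) ^ l" by simp
  finally show "norm (ff l) \<le> (1/3) * (1/3::real) ^ l" .
qed

lemma fact_shift: "fact (Suc n) + m \<le> (fact (Suc (m + n)) :: nat)"
proof (induction m)
  case 0 then show ?case by simp
next
  case (Suc m)
  have "fact (Suc (Suc m + n)) = (Suc (Suc (m+n))) * (fact (Suc (m + n)) :: nat)" by simp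
  moreover have "(1::nat) \<le> fact (Suc (m + n))" by (simp add: Suc_leI)
  ultimately have "fact (Suc (Suc m + n)) \<ge> fact (Suc (m + n)) + (1::nat)" by (simp add: algebra_simps)
  with Suc show ?case by simp
qed

lemma ff_tail_le: "ff (m + n) \<le> (1 / 3 ^ fact (Suc n)) * (1/3) ^ m"
proof -
  have "(3::real) ^ (fact (Suc n) + m) \<le> 3 ^ fact (Suc (m + n))"
    by (rule power_increasing) (use fact_shift in auto)
  thus ?thesis by (simp add: ff_def power_add power_one_over divide_simps)
qed

definition zeta where "zeta = 2 * (\<Sum>l. 1 / 3 ^ fact (Suc l) :: real)"

lemma zeta_ff: "zeta = 2 * suminf ff" by (simp add: zeta_def ff_def[abs_def])

lemma tail_eq: "zeta - zs n = 2 * (\<Sum>m. ff (m + n))"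
  using suminf_split_initial_segment[OF summable_ff, of n] by (simp add: zeta_ff zs_def)

lemma tail_pos: "zeta - zs n > 0"
proof -
  have s: "summable (\<lambda>m. ff (m + n))" using summable_ff by (simp add: summable_iff_shift)
  have "0 < (\<Sum>m. ff (m + n))" by (rule suminf_pos[OF s]) (simp add: ff_pos)
  thus ?thesis by (simp add: tail_eq)
qed

lemma tail_le: "zeta - zs n \<le> 3 / 3 ^ fact (Suc n)"
proof -
  have s: "summable (\<lambda>m. ff (m + n))" using summable_ff by (simp add: summable_iff_shift)
  have g: "summable (\<lambda>m. (1 / 3 ^ fact (Suc n)) * (1/3::real) ^ m)"
    by (intro summable_mult summable_geometric) simp
  have "(\<Sum>m. ff (m + n)) \<le> (\<Sum>m. (1 / 3 ^ fact (Suc n)) * (1/3::real) ^ m)"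
    by (rule suminf_le[OF _ s g]) (rule ff_tail_le)
  also have "\<dots> = (1 / 3 ^ fact (Suc n)) * (\<Sum>m. (1/3::real) ^ m)"
    by (rule suminf_mult) (rule summable_geometric, simp)
  also have "(\<Sum>m. (1/3::real) ^ m) = 3/2"
    by (subst suminf_geometric) auto
  finally show ?thesis by (simp add: tail_eq)
qed

lemma zs_Suc: "zs (Suc n) = zs n + 2 / real (qn (Suc n))"
  by (simp add: zs_def qn_def ff_def algebra_simps)

lemma qn_Suc: "qn (Suc n) = qn n ^ Suc n"
proof -
  have "fact (Suc n) = fact n * Suc n" by simp
  thus ?thesis unfolding qn_def by (simp only: power_mult)
qed

lemma qn_ge3: "n \<ge> 1 \<Longrightarrow> qn n \<ge> 3"
proof -
  assume "n \<ge> 1"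
  have "1 \<le> (fact n::nat)" by (rule fact_ge_1)
  hence "(3::nat) ^ 1 \<le> 3 ^ fact n" by (rule power_increasing) auto
  thus ?thesis by (simp add: qn_def)
qed

lemma qn_pos: "qn n > 0" by (simp add: qn_def)

lemma zs_eq: "zs n = real (pn n) / real (qn n)"
proof -
  have "real (pn n) = (\<Sum>l<n. 2 * 3 ^ (fact n - fact (Suc l)))" by (simp add: pn_def)
  also have "\<dots> = (\<Sum>l<n. 2 * ff l * 3 ^ fact n)"
  proof (rule sum.cong)
    fix l assume "l \<in> {..<n}"
    hence "fact (Suc l) \<le> (fact n :: nat)" by (intro fact_mono) auto
    hence "(3::real) ^ fact n = 3 ^ (fact n - fact (Suc l)) * 3 ^ fact (Suc l)"
      by (simp add: power_add[symmetric])
    thus "2 * 3 ^ (fact n - fact (Suc l)) = 2 * ff l * (3::real) ^ fact n"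
      by (simp add: ff_def)
  qed simp
  finally show ?thesis by (simp add: zs_def qn_def sum_distrib_left sum_distrib_right field_simps)
qed

lemma zs1: "zs 1 = 2/3" by (simp add: zs_def ff_def)

lemma zeta_le1: "zeta \<le> 1"
  using tail_le[of 1] zs1 by simp

lemma zeta_ge: "zeta \<ge> 2/3"
  using tail_pos[of 1] zs1 by simp

lemma zs_nonneg: "zs n \<ge> 0" by (simp add: zs_def sum_nonneg less_imp_le[OF ff_pos])

lemma pn_lt_qn: "pn n < qn n"
proof -
  have "zs n < 1" using tail_pos[of n] zeta_le1 by simp
  hence "real (pn n) < real (qn n)" using qn_pos[of n] by (simp add: zs_eq divide_simps)
  thus ?thesis by simp
qed

lemma pn_mod3: "n \<ge> 1 \<Longrightarrow> pn n mod 3 = 2"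
proof -
  assume n: "n \<ge> 1"
  then obtain m where m: "n = Suc m" by (cases n) auto
  have "pn n = (\<Sum>l<m. 2 * 3 ^ (fact n - fact (Suc l))) + 2"
    by (simp add: pn_def m)
  moreover have "3 dvd (\<Sum>l<m. 2 * 3 ^ (fact n - fact (Suc l)) :: nat)"
  proof (rule dvd_sum)
    fix l assume "l \<in> {..<m}"
    hence "fact (Suc l) < (fact n :: nat)" by (intro fact_less_mono) (auto simp: m)
    hence "fact n - fact (Suc l) \<noteq> (0::nat)" by simp
    thus "3 dvd (2 * 3 ^ (fact n - fact (Suc l)) :: nat)" by simp
  qed
  ultimately show ?thesis by (auto elim!: dvdE) presburger
qed

lemma coprime_pq: "n \<ge> 1 \<Longrightarrow> coprime (int (pn n)) (int (qn n))"
proof -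
  assume n: "n \<ge> 1"
  have "\<not> (3::int) dvd int (pn n)" using pn_mod3[OF n]
    by (metis dvd_imp_mod_0 int_dvd_int_iff of_nat_numeral zero_neq_numeral)
  hence "coprime (int (pn n)) 3" using prime_imp_coprime[of "3::int"]
    by (simp add: coprime_commute)
  hence "coprime (int (pn n)) (3 ^ fact n)" by simp
  thus ?thesis by (simp add: qn_def)
qed

lemma pow_diff_le:
  fixes z w :: real
  assumes "0 \<le> z" "z \<le> 1" "0 \<le> w" "w \<le> 1"
  shows "\<bar>z ^ i - w ^ i\<bar> \<le> real i * \<bar>z - w\<bar>"
proof (induction i)
  case 0 then show ?case by simp
next
  case (Suc i)
  have "z ^ Suc i - w ^ Suc i = z * (z ^ i - w ^ i) + w ^ i * (z - w)" by (simp add: algebra_simps)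
  hence "\<bar>z ^ Suc i - w ^ Suc i\<bar> \<le> \<bar>z\<bar> * \<bar>z ^ i - w ^ i\<bar> + \<bar>w ^ i\<bar> * \<bar>z - w\<bar>"
    by (metis abs_mult abs_triangle_ineq)
  also have "\<dots> \<le> 1 * \<bar>z ^ i - w ^ i\<bar> + 1 * \<bar>z - w\<bar>"
    using assms by (intro add_mono mult_right_mono) (auto simp: power_le_one abs_le_iff)
  finally have "\<bar>z ^ Suc i - w ^ Suc i\<bar> \<le> \<bar>z ^ i - w ^ i\<bar> + \<bar>z - w\<bar>" by simp
  also have "\<dots> \<le> real i * \<bar>z - w\<bar> + \<bar>z - w\<bar>" using Suc by simp
  also have "\<dots> = real (Suc i) * \<bar>z - w\<bar>" by (simp add: algebra_simps)
  finally show ?case .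
qed

lemma zeta_cantor: "zeta \<in> cantor_set"
proof -
  define g where "g l = fact (Suc l) - (1::nat)" for l
  define d where "d i = (if i \<in> range g then 2 else 0::nat)" for i
  have sm: "strict_mono g"
  proof (rule strict_monoI_Suc)
    fix l
    have "fact (Suc l) < (fact (Suc (Suc l)) :: nat)" by (intro fact_less_mono) auto
    moreover have "(1::nat) \<le> fact (Suc l)" by (simp add: Suc_leI)
    ultimately show "g l < g (Suc l)" by (simp add: g_def)
  qed
  have fg: "Suc (g l) = fact (Suc l)" for l
    using fact_ge_1[of "Suc l", where 'a=nat] by (simp add: g_def)
  have "(\<lambda>l. 2 * ff l) sums zeta" using summable_ff by (simp add: zeta_ff sums_mult summable_sums)
  moreover have "(\<lambda>l. real (d (g l)) / 3 ^ Suc (g l)) = (\<lambda>l. 2 * ff l)"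
    by (auto simp: d_def ff_def fg)
  ultimately have "(\<lambda>l. real (d (g l)) / 3 ^ Suc (g l)) sums zeta" by simp
  hence s: "(\<lambda>i. real (d i) / 3 ^ Suc i) sums zeta"
    by (subst (asm) sums_mono_reindex[OF sm, where f = "\<lambda>i. real (d i) / 3 ^ Suc i"]) (auto simp: d_def)
  have "\<forall>i. d i = 0 \<or> d i = 2" by (simp add: d_def)
  thus ?thesis unfolding cantor_set_def
    using zeta_le1 zeta_ge s by (auto intro!: exI[of _ d] simp: sums_iff)
qed

lemma int_frac_ge:
  fixes N :: int and q :: nat
  assumes "N \<noteq> 0" "q > 0"
  shows "\<bar>real_of_int N / real q\<bar> \<ge> 1 / real q"
proof -
  have "1 \<le> \<bar>real_of_int N\<bar>" using assms(1) by linarith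
  hence "1 / real q \<le> \<bar>real_of_int N\<bar> / real q" by (rule divide_right_mono) simp
  also have "\<dots> = \<bar>real_of_int N / real q\<bar>" by (simp add: abs_divide)
  finally show ?thesis .
qed

lemma exact_step:
  fixes v :: "nat \<Rightarrow> int"
  assumes n: "n \<ge> 1" and e: "zs n ^ a * real_of_int (v 0) = real_of_int (v a)"
  shows "int (qn n) ^ a dvd v 0"
proof -
  have q0: "real (qn n) \<noteq> 0" using qn_pos[of n] by simp
  have "real (pn n) ^ a * real_of_int (v 0) = real (qn n) ^ a * real_of_int (v a)"
    using e q0 by (simp add: zs_eq power_divide field_simps)
  hence "int (pn n) ^ a * v 0 = int (qn n) ^ a * v a"
  proof -
    have "real_of_int (int (pn n) ^ a * v 0) = real_of_int (int (qn n) ^ a * v a)"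
      using \<open>real (pn n) ^ a * real_of_int (v 0) = real (qn n) ^ a * real_of_int (v a)\<close> by simp
    thus ?thesis by (simp only: of_int_eq_iff)
  qed
  hence "int (qn n) ^ a dvd int (pn n) ^ a * v 0" by (metis dvd_triv_left)
  moreover have "coprime (int (qn n) ^ a) (int (pn n) ^ a)"
    using coprime_pq[OF n] by (simp add: coprime_commute)
  ultimately show ?thesis by (simp add: coprime_dvd_mult_right_iff)
qed

lemma rational_gap:
  fixes v :: "nat \<Rightarrow> int"
  assumes n: "n \<ge> 1" and ex: "\<exists>i\<in>{1..k}. zs n ^ i * real_of_int (v 0) \<noteq> real_of_int (v i)"
  shows "\<exists>i\<in>{1..k}. \<bar>zs n ^ i * real_of_int (v 0) - real_of_int (v i)\<bar> \<ge> 1 / real (qn n)"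
proof -
  define P where "P i = (i \<in> {1..k} \<and> zs n ^ i * real_of_int (v 0) \<noteq> real_of_int (v i))" for i
  have "\<exists>i. P i" using ex by (auto simp: P_def)
  define i0 where "i0 = (LEAST i. P i)"
  have Pi0: "P i0" unfolding i0_def by (rule LeastI_ex) fact
  have min: "i < i0 \<Longrightarrow> \<not> P i" for i unfolding i0_def by (rule not_less_Least)
  have i0: "i0 \<in> {1..k}" using Pi0 by (simp add: P_def)
  then obtain a where a: "i0 = Suc a" by (cases i0) auto
  have ea: "zs n ^ a * real_of_int (v 0) = real_of_int (v a)"
  proof (cases "a = 0")
    case True then show ?thesis by simp
  next
    case False
    hence "a \<in> {1..k}" using i0 a by auto
    moreover have "\<not> P a" using min a by simp
    ultimately show ?thesis by (simp add: P_def)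
  qed
  from exact_step[OF n ea] obtain w where w: "v 0 = int (qn n) ^ a * w" by (auto elim!: dvdE)
  have q0: "real (qn n) > 0" using qn_pos[of n] by simp
  have "zs n ^ i0 * real_of_int (v 0) - real_of_int (v i0)
        = real_of_int (int (pn n) ^ i0 * w - int (qn n) * v i0) / real (qn n)"
  proof -
    have "zs n ^ i0 * real_of_int (v 0) = (real (pn n) / real (qn n)) ^ Suc a * (real (qn n) ^ a * real_of_int w)"
      by (simp add: zs_eq w a)
    also have "\<dots> = real (pn n) ^ Suc a * real_of_int w / real (qn n)"
      using q0 by (simp add: power_divide field_simps)
    finally show ?thesis using q0 by (simp add: a field_simps)
  qed
  moreover have nz: "int (pn n) ^ i0 * w - int (qn n) * v i0 \<noteq> 0"
  proof
    assume "int (pn n) ^ i0 * w - int (qn n) * v i0 = 0"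
    hence "zs n ^ i0 * real_of_int (v 0) - real_of_int (v i0) = 0"
      using q0 `zs n ^ i0 * real_of_int (v 0) - real_of_int (v i0) = _` by simp
    thus False using Pi0 by (simp add: P_def)
  qed
  ultimately have "\<bar>zs n ^ i0 * real_of_int (v 0) - real_of_int (v i0)\<bar> \<ge> 1 / real (qn n)"
    using int_frac_ge[OF nz qn_pos[of n]] by simp
  thus ?thesis using i0 by blast
qed

lemma zeta_pow_close:
  "\<bar>zeta ^ i - zs n ^ i\<bar> \<le> real i * (3 / real (qn (Suc n)))"
proof -
  have "\<bar>zeta ^ i - zs n ^ i\<bar> \<le> real i * \<bar>zeta - zs n\<bar>"
    by (rule pow_diff_le) (use zeta_le1 zeta_ge zs_nonneg tail_pos[of n] in auto)
  also have "\<bar>zeta - zs n\<bar> \<le> 3 / real (qn (Suc n))"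
    using tail_le[of n] tail_pos[of n] by (simp add: qn_def)
  finally show ?thesis by (simp add: mult_left_mono)
qed

lemma zeta_gap:
  fixes v :: "nat \<Rightarrow> int"
  assumes n: "n \<ge> 1" and ex: "\<exists>i\<in>{1..k}. zs n ^ i * real_of_int (v 0) \<noteq> real_of_int (v i)"
    and vX: "\<bar>real_of_int (v 0)\<bar> \<le> X"
    and XQ: "6 * real k * real (qn n) * X \<le> real (qn (Suc n))"
  shows "\<exists>i\<in>{1..k}. \<bar>zeta ^ i * real_of_int (v 0) - real_of_int (v i)\<bar> \<ge> 1 / (2 * real (qn n))"
proof -
  obtain i where i: "i \<in> {1..k}" and g: "\<bar>zs n ^ i * real_of_int (v 0) - real_of_int (v i)\<bar> \<ge> 1 / real (qn n)"
    using rational_gap[OF n ex] by blast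
  have q0: "real (qn n) > 0" "real (qn (Suc n)) > 0" using qn_pos by auto
  have "\<bar>(zeta ^ i - zs n ^ i) * real_of_int (v 0)\<bar> \<le> real i * (3 / real (qn (Suc n))) * X"
    unfolding abs_mult by (intro mult_mono zeta_pow_close vX) auto
  also have "\<dots> \<le> real k * (3 / real (qn (Suc n))) * X"
    using i vX q0 by (intro mult_right_mono) auto
  also have "\<dots> \<le> 1 / (2 * real (qn n))"
    using XQ q0 by (simp add: field_simps)
  finally have "\<bar>(zeta ^ i - zs n ^ i) * real_of_int (v 0)\<bar> \<le> 1 / (2 * real (qn n))" .
  moreover have "zeta ^ i * real_of_int (v 0) - real_of_int (v i)
      = (zs n ^ i * real_of_int (v 0) - real_of_int (v i)) + (zeta ^ i - zs n ^ i) * real_of_int (v 0)"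
    by (simp add: algebra_simps)
  ultimately have "\<bar>zeta ^ i * real_of_int (v 0) - real_of_int (v i)\<bar> \<ge> 1 / real (qn n) - 1 / (2 * real (qn n))"
    using g by linarith
  also have "1 / real (qn n) - 1 / (2 * real (qn n)) = 1 / (2 * real (qn n))" by simp
  finally show ?thesis using i by blast
qed

lemma qn_ge_n: "real n \<le> real (qn n)"
proof -
  have "n \<le> fact n" by (rule fact_ge_self)
  also have "fact n < (2::nat) ^ fact n" by (rule less_exp)
  also have "(2::nat) ^ fact n \<le> 3 ^ fact n" by (rule power_mono) auto
  finally show ?thesis by (simp add: qn_def)
qed

lemma lin_indep_two_exact:
  fixes V :: "nat \<Rightarrow> nat \<Rightarrow> int"
  assumes j: "j \<ge> 2" and ex: "\<forall>m. m < (2::nat) \<longrightarrow> (\<forall>i\<in>{1..k}. zs n ^ i * real_of_int (V m 0) = real_of_int (V m i))"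
  shows "\<not> lin_indep_int k j V"
proof
  assume li: "lin_indep_int k j V"
  have li': "\<And>c. (\<forall>t\<le>k. (\<Sum>m<j. c m * real_of_int (V m t)) = 0) \<Longrightarrow> (\<forall>m<j. c m = 0)"
    using li by (simp add: lin_indep_int_def)
  have j0: "0 \<in> {..<j}" "1 \<in> {..<j}" using j by auto
  define c1 where "c1 (m::nat) = (if m = 0 then real_of_int (V 1 0) else if m = 1 then - real_of_int (V 0 0) else 0)" for m
  have "\<forall>t\<le>k. (\<Sum>m<j. c1 m * real_of_int (V m t)) = 0"
  proof (intro allI impI)
    fix t assume t: "t \<le> k"
    have "(\<Sum>m<j. c1 m * real_of_int (V m t))
        = (\<Sum>m<j. (if m = 0 then real_of_int (V 1 0) * real_of_int (V 0 t) else 0)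
                 + (if m = 1 then - real_of_int (V 0 0) * real_of_int (V 1 t) else 0))"
      by (rule sum.cong) (auto simp: c1_def)
    also have "\<dots> = real_of_int (V 1 0) * real_of_int (V 0 t) - real_of_int (V 0 0) * real_of_int (V 1 t)"
      using j0 by (simp add: sum.distrib)
    also have "\<dots> = 0"
    proof (cases "t = 0")
      case True then show ?thesis by simp
    next
      case False
      hence "t \<in> {1..k}" using t by auto
      hence "real_of_int (V 0 t) = zs n ^ t * real_of_int (V 0 0)"
            "real_of_int (V 1 t) = zs n ^ t * real_of_int (V 1 0)"
        using ex by auto
      thus ?thesis by simp
    qed
    finally show "(\<Sum>m<j. c1 m * real_of_int (V m t)) = 0" .
  qed
  from li'[OF this] have "c1 0 = 0" "c1 1 = 0" using j by auto
  hence z: "V 1 0 = 0" "V 0 0 = 0" by (auto simp: c1_def)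
  define c2 where "c2 (m::nat) = (if m = 0 then 1 else (0::real))" for m
  have "\<forall>t\<le>k. (\<Sum>m<j. c2 m * real_of_int (V m t)) = 0"
  proof (intro allI impI)
    fix t assume t: "t \<le> k"
    have "V 0 t = 0"
    proof (cases "t = 0")
      case True then show ?thesis using z by simp
    next
      case False
      hence "t \<in> {1..k}" using t by auto
      hence "real_of_int (V 0 t) = zs n ^ t * real_of_int (V 0 0)" using ex by auto
      thus ?thesis using z by simp
    qed
    have "(\<Sum>m<j. c2 m * real_of_int (V m t)) = (\<Sum>m<j. if m = 0 then real_of_int (V m t) else 0)"
      by (rule sum.cong) (auto simp: c2_def)
    also have "\<dots> = real_of_int (V 0 t)" using j0 by (simp add: sum.delta)
    finally show "(\<Sum>m<j. c2 m * real_of_int (V m t)) = 0" using \<open>V 0 t = 0\<close> by simp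
  qed
  from li'[OF this] have "c2 0 = 0" using j by auto
  thus False by (simp add: c2_def)
qed

lemma exact_small:
  fixes v :: "nat \<Rightarrow> int"
  assumes n: "n \<ge> 1" and k: "k \<ge> 1"
    and ex: "\<forall>i\<in>{1..k}. zs n ^ i * real_of_int (v 0) = real_of_int (v i)"
    and small: "\<bar>real_of_int (v 0)\<bar> < real (qn n) ^ k"
  shows "\<forall>t\<le>k. v t = 0"
proof -
  have "int (qn n) ^ k dvd v 0" by (rule exact_step[OF n]) (use ex k in auto)
  then obtain w where w: "v 0 = int (qn n) ^ k * w" by (auto elim!: dvdE)
  have "w = 0"
  proof (rule ccontr)
    assume "w \<noteq> 0"
    hence "1 \<le> \<bar>real_of_int w\<bar>" by linarith
    hence "real (qn n) ^ k * 1 \<le> real (qn n) ^ k * \<bar>real_of_int w\<bar>" by (intro mult_left_mono) auto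
    thus False using small by (simp add: w abs_mult)
  qed
  hence v0: "v 0 = 0" using w by simp
  show ?thesis
  proof (intro allI impI)
    fix t assume "t \<le> k"
    thus "v t = 0" using ex v0 by (cases "t = 0") auto
  qed
qed

lemma powr_gt_from_root:
  fixes q A e :: real
  assumes "e > 0" "A > 0" "q > A powr (1/e)"
  shows "q powr e > A"
proof -
  have "(A powr (1/e)) powr e < q powr e" by (rule powr_less_mono2) (use assms in auto)
  thus ?thesis using assms by (simp add: powr_powr)
qed

lemma hat1_upper:
  assumes k: "k \<ge> 1" and eta: "\<eta> > 1 / real k"
  shows "\<not> (\<forall>\<^sub>F X in at_top. has_indep_sols k 1 (veronese zeta) X \<eta>)"
proof
  assume "\<forall>\<^sub>F X in at_top. has_indep_sols k 1 (veronese zeta) X \<eta>"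
  then obtain N where N: "\<And>X. X \<ge> N \<Longrightarrow> has_indep_sols k 1 (veronese zeta) X \<eta>"
    by (auto simp: eventually_at_top_linorder)
  define e where "e = real k * \<eta> - 1"
  have kpos: "real k > 0" using k by simp
  have e: "e > 0" using eta kpos by (simp add: e_def field_simps)
  have eta0: "\<eta> > 0" using eta kpos by (smt (verit) divide_pos_pos)
  define A where "A = 2 * 2 powr \<eta>"
  have A: "A > 0" by (simp add: A_def)
  define n where "n = max (k + 1) (max (3 * k) (max (nat \<lceil>A powr (1/e)\<rceil> + 1) (nat \<lceil>2 * N\<rceil>)))"
  have n1: "n \<ge> 1" "n \<ge> k + 1" and n3k: "n \<ge> 3 * k" by (auto simp: n_def)
  have nA: "real n > A powr (1/e)" unfolding n_def by linarith
  have nN: "real n \<ge> 2 * N" unfolding n_def by linarith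
  define q where "q = real (qn n)"
  have qn: "q \<ge> real n" unfolding q_def by (rule qn_ge_n)
  have q1: "q \<ge> 1" using qn n1 by simp
  define X where "X = q ^ k / 2"
  have qk: "q \<le> q ^ k" using power_increasing[of 1 k q] q1 k by simp
  have XN: "X \<ge> N" using qk qn nN by (simp add: X_def)
  have X1: "X > 0" using q1 by (simp add: X_def)
  have XQ: "6 * real k * q * X \<le> real (qn (Suc n))"
  proof -
    have "6 * real k * q * X = 3 * real k * q ^ (k + 1)" by (simp add: X_def)
    also have "\<dots> \<le> q * q ^ (k + 1)"
      using qn n3k q1 by (intro mult_right_mono) auto
    also have "\<dots> = q ^ (k + 2)" by simp
    also have "\<dots> \<le> q ^ Suc n" using q1 n1 by (intro power_increasing) auto
    also have "\<dots> = real (qn (Suc n))" by (simp add: q_def qn_Suc)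
    finally show ?thesis .
  qed
  from N[OF XN] obtain V where V: "approx_sol k (veronese zeta) X \<eta> (V 0)" and li: "lin_indep_int k 1 V"
    unfolding has_indep_sols_def by auto
  have nz: "\<exists>t\<le>k. V 0 t \<noteq> 0"
  proof (rule ccontr)
    assume "\<not> ?thesis"
    hence "\<forall>t\<le>k. (\<Sum>m<1. (\<lambda>_. 1::real) m * real_of_int (V m t)) = 0" by simp
    moreover have "(\<forall>t\<le>k. (\<Sum>m<1. (\<lambda>_. 1::real) m * real_of_int (V m t)) = 0) \<longrightarrow> (\<forall>m<1. (\<lambda>_. 1::real) m = 0)"
      using li unfolding lin_indep_int_def by (erule_tac allE[where x="\<lambda>_. 1"]) auto
    ultimately show False by auto
  qed
  have vX: "\<bar>real_of_int (V 0 0)\<bar> \<le> X" using V by (simp add: approx_sol_def)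
  have "X < q ^ k" using X1 by (simp add: X_def)
  have ex: "\<exists>i\<in>{1..k}. zs n ^ i * real_of_int (V 0 0) \<noteq> real_of_int (V 0 i)"
  proof (rule ccontr)
    assume "\<not> ?thesis"
    hence "\<forall>t\<le>k. V 0 t = 0"
      by (intro exact_small[OF n1(1) k]) (use vX \<open>X < q ^ k\<close> in \<open>auto simp: q_def\<close>)
    thus False using nz by blast
  qed
  obtain i where i: "i \<in> {1..k}" and g: "\<bar>zeta ^ i * real_of_int (V 0 0) - real_of_int (V 0 i)\<bar> \<ge> 1 / (2 * q)"
    using zeta_gap[OF n1(1) ex vX] XQ by (auto simp: q_def)
  have "\<bar>zeta ^ i * real_of_int (V 0 0) - real_of_int (V 0 i)\<bar> \<le> X powr (- \<eta>)"
    using V i by (auto simp: approx_sol_def veronese_def)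
  hence le: "1 / (2 * q) \<le> X powr (- \<eta>)" using g by linarith
  have qkp: "q ^ k = q powr (real k)" using q1 by (simp add: powr_realpow)
  have "X powr \<eta> = (q ^ k) powr \<eta> / 2 powr \<eta>"
    unfolding X_def using q1 by (intro powr_divide)
  also have "(q ^ k) powr \<eta> = q powr (real k * \<eta>)"
    unfolding qkp by (simp add: powr_powr)
  also have "real k * \<eta> = 1 + e" by (simp add: e_def)
  also have "q powr (1 + e) = q * q powr e"
    using q1 by (subst powr_add) simp
  finally have Xe: "X powr \<eta> = q * q powr e / 2 powr \<eta>" .
  have "q powr e > A" by (rule powr_gt_from_root[OF e A]) (use qn nA in linarith)
  hence "q * q powr e > q * A" using q1 by simp
  hence "X powr \<eta> > 2 * q" unfolding Xe A_def by (simp add: field_simps)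
  hence "X powr (- \<eta>) < 1 / (2 * q)" using X1 q1 by (simp add: powr_minus divide_simps)
  with le show False by simp
qed

lemma hatj_upper:
  assumes k: "k \<ge> 1" and j: "j \<ge> 2" and eta: "\<eta> > 0"
  shows "\<not> (\<forall>\<^sub>F X in at_top. has_indep_sols k j (veronese zeta) X \<eta>)"
proof
  assume "\<forall>\<^sub>F X in at_top. has_indep_sols k j (veronese zeta) X \<eta>"
  then obtain N where N: "\<And>X. X \<ge> N \<Longrightarrow> has_indep_sols k j (veronese zeta) X \<eta>"
    by (auto simp: eventually_at_top_linorder)
  define n where "n = max 2 (max (6 * k) (max (nat \<lceil>2 / \<eta>\<rceil> + 1) (nat \<lceil>N\<rceil>)))"
  have n2: "n \<ge> 2" and n6: "n \<ge> 6 * k" by (auto simp: n_def)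
  have nE: "real n - 1 \<ge> 2 / \<eta>" unfolding n_def by linarith
  have nN: "real n \<ge> N" unfolding n_def by linarith
  define q where "q = real (qn n)"
  have qn: "q \<ge> real n" unfolding q_def by (rule qn_ge_n)
  have q2: "q \<ge> 2" using qn n2 by simp
  have q3: "q \<ge> 3" using qn_ge3[of n] n2 by (simp add: q_def)
  define X where "X = q ^ n / (6 * real k)"
  obtain m where m: "n = Suc m" using n2 by (cases n) auto
  have Xq: "X \<ge> q ^ m"
  proof -
    have "6 * real k * q ^ m \<le> q * q ^ m" using qn n6 q2 by (intro mult_right_mono) auto
    thus ?thesis using k by (simp add: X_def m field_simps)
  qed
  have "q \<le> q ^ m" using q2 n2 m by (metis One_nat_def Suc_le_mono le_numeral_extra(4) less_1_mult nat_1_add_1 numeral_le_one_iff one_le_numeral order.order_iff_strict plus_1_eq_Suc power_increasing power_one_right semiring_norm(69) zero_order(1) dual_order.trans)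
  hence XN: "X \<ge> N" using Xq qn nN by linarith
  have X0: "X > 0" using q2 k by (simp add: X_def)
  have XQ: "6 * real k * q * X \<le> real (qn (Suc n))"
    using k by (simp add: X_def q_def qn_Suc)
  from N[OF XN] obtain V where V: "\<forall>m<j. approx_sol k (veronese zeta) X \<eta> (V m)" and li: "lin_indep_int k j V"
    unfolding has_indep_sols_def by auto
  have "\<exists>m<2. \<exists>i\<in>{1..k}. zs n ^ i * real_of_int (V m 0) \<noteq> real_of_int (V m i)"
    using lin_indep_two_exact[OF j, of k n V] li by blast
  then obtain m' where m': "m' < 2" and ex: "\<exists>i\<in>{1..k}. zs n ^ i * real_of_int (V m' 0) \<noteq> real_of_int (V m' i)"
    by blast
  have Vm: "approx_sol k (veronese zeta) X \<eta> (V m')" using V m' j by auto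
  have vX: "\<bar>real_of_int (V m' 0) \<bar> \<le> X" using Vm by (simp add: approx_sol_def)
  obtain i where i: "i \<in> {1..k}" and g: "\<bar>zeta ^ i * real_of_int (V m' 0) - real_of_int (V m' i)\<bar> \<ge> 1 / (2 * q)"
    using zeta_gap[OF _ ex vX] n2 XQ by (auto simp: q_def)
  have "\<bar>zeta ^ i * real_of_int (V m' 0) - real_of_int (V m' i)\<bar> \<le> X powr (- \<eta>)"
    using Vm i by (auto simp: approx_sol_def veronese_def)
  hence le: "1 / (2 * q) \<le> X powr (- \<eta>)" using g by linarith
  have "X powr \<eta> \<ge> (q ^ m) powr \<eta>" by (rule powr_mono2) (use eta Xq q2 in auto)
  also have "(q ^ m) powr \<eta> = q powr (real m * \<eta>)"
    using q2 by (simp add: powr_realpow[symmetric] powr_powr)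
  also have "q powr (real m * \<eta>) \<ge> q powr 2"
    using q2 nE eta m by (intro powr_mono) (auto simp: field_simps)
  also have "q powr 2 = q * q" using q2 by (simp add: powr_realpow[symmetric] power2_eq_square)
  finally have "X powr \<eta> \<ge> q * q" .
  moreover have "q * q > 2 * q" using q3 by simp
  ultimately have "X powr \<eta> > 2 * q" by linarith
  hence "X powr (- \<eta>) < 1 / (2 * q)" using X0 q2 by (simp add: powr_minus divide_simps)
  with le show False by simp
qed

lemma frequently_at_topI:
  assumes "\<And>N. \<exists>X\<ge>N. P X"
  shows "\<exists>\<^sub>F X in at_top. P (X::real)"
  unfolding frequently_def eventually_at_top_linorder using assms by (metis order.refl)

lemma has_indep_sols_mono:
  assumes "has_indep_sols k j z X \<eta>'" "\<eta> \<le> \<eta>'" "X \<ge> 1"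
  shows "has_indep_sols k j z X \<eta>"
proof -
  have "X powr (- \<eta>') \<le> X powr (- \<eta>)" using assms(2,3) by (intro powr_mono) auto
  thus ?thesis using assms(1) unfolding has_indep_sols_def approx_sol_def by (meson order.trans)
qed

lemma trivial_sols:
  assumes j: "j \<le> k + 1" and X: "X \<ge> 1" and eta: "\<eta> \<le> 0" and z: "0 \<le> z" "z \<le> 1"
  shows "has_indep_sols k j (veronese z) X \<eta>"
proof -
  define V where "V m t = (if t = m then 1 else (0::int))" for m t :: nat
  have Xe: "1 \<le> X powr (- \<eta>)" using X eta by (simp add: ge_one_powr_ge_zero)
  have "approx_sol k (veronese z) X \<eta> (V m)" if m: "m < j" for m
    unfolding approx_sol_def
  proof (intro conjI ballI allI impI)
    fix i assume "i > k" thus "V m i = 0" using m j by (simp add: V_def)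
  next
    show "\<bar>real_of_int (V m 0)\<bar> \<le> X" using X by (simp add: V_def)
  next
    fix i assume i: "i \<in> {1..k}"
    have "\<bar>veronese z i * real_of_int (V m 0) - real_of_int (V m i)\<bar> \<le> 1"
      using i z by (auto simp: V_def veronese_def power_le_one)
    thus "\<bar>veronese z i * real_of_int (V m 0) - real_of_int (V m i)\<bar> \<le> X powr - \<eta>"
      using Xe by linarith
  qed
  moreover have "lin_indep_int k j V"
    unfolding lin_indep_int_def
  proof (intro allI impI)
    fix c :: "nat \<Rightarrow> real" and m
    assume h: "\<forall>t\<le>k. (\<Sum>m<j. c m * real_of_int (V m t)) = 0" and m: "m < j"
    have "(\<Sum>m'<j. c m' * real_of_int (V m' m)) = (\<Sum>m'<j. if m = m' then c m' else 0)"
      by (rule sum.cong) (auto simp: V_def)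
    also have "\<dots> = c m" using m by (simp add: sum.delta)
    finally show "c m = 0" using h m j by auto
  qed
  ultimately show ?thesis unfolding has_indep_sols_def by blast
qed

lemma dirichlet:
  fixes z :: real and N k :: nat
  assumes N: "N \<ge> 1"
  shows "\<exists>d::nat. \<exists>y::nat \<Rightarrow> int. 1 \<le> d \<and> d \<le> N ^ k \<and> (\<forall>i\<in>{1..k}. \<bar>real d * z ^ i - real_of_int (y i)\<bar> < 1 / real N)"
proof -
  define f where "f x = restrict (\<lambda>i. nat \<lfloor>real N * frac (real x * z ^ i)\<rfloor>) {1..k}" for x :: nat
  define B where "B = PiE {1..k} (\<lambda>_. {..<N})"
  have fB: "f ` {0..N^k} \<subseteq> B"
  proof
    fix g assume "g \<in> f ` {0..N^k}"
    then obtain x where g: "g = f x" by auto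
    have "nat \<lfloor>real N * frac (real x * z ^ i)\<rfloor> < N" for i
    proof -
      have "real N * frac (real x * z ^ i) < real N * 1"
        using N by (intro mult_strict_left_mono) (auto simp: frac_lt_1)
      hence "\<lfloor>real N * frac (real x * z ^ i)\<rfloor> < int N" by (simp add: floor_less_iff)
      thus ?thesis using N by arith
    qed
    thus "g \<in> B" unfolding g B_def f_def by auto
  qed
  have cB: "card B = N ^ k" by (simp add: B_def card_PiE)
  have "card (f ` {0..N^k}) \<le> N ^ k" using card_mono[OF _ fB] cB by (simp add: B_def finite_PiE)
  hence "\<not> inj_on f {0..N^k}" using card_image[of f "{0..N^k}"] by auto
  then obtain x x' where xx: "x \<in> {0..N^k}" "x' \<in> {0..N^k}" "x \<noteq> x'" "f x = f x'"
    unfolding inj_on_def by blast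
  obtain a b where a: "a \<in> {0..N^k}" and b: "b \<in> {0..N^k}" and ab: "a < b" and fab: "f a = f b"
    using xx by (metis linorder_neq_iff)
  define y where "y i = \<lfloor>real b * z ^ i\<rfloor> - \<lfloor>real a * z ^ i\<rfloor>" for i
  have "\<forall>i\<in>{1..k}. \<bar>real (b - a) * z ^ i - real_of_int (y i)\<bar> < 1 / real N"
  proof
    fix i assume i: "i \<in> {1..k}"
    have fl: "\<lfloor>real N * frac (real a * z ^ i)\<rfloor> = \<lfloor>real N * frac (real b * z ^ i)\<rfloor>"
    proof -
      have "f a i = f b i" using fab by simp
      hence "nat \<lfloor>real N * frac (real a * z ^ i)\<rfloor> = nat \<lfloor>real N * frac (real b * z ^ i)\<rfloor>"
        using i by (simp add: f_def)
      moreover have "0 \<le> \<lfloor>real N * frac (real a * z ^ i)\<rfloor>" "0 \<le> \<lfloor>real N * frac (real b * z ^ i)\<rfloor>"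
        by (simp_all add: frac_ge_0)
      ultimately show ?thesis using eq_nat_nat_iff by blast
    qed
    have "\<bar>real N * frac (real b * z ^ i) - real N * frac (real a * z ^ i)\<bar> < 1"
      using fl by linarith
    moreover have "real N * frac (real b * z ^ i) - real N * frac (real a * z ^ i)
        = real N * (frac (real b * z ^ i) - frac (real a * z ^ i))" by (simp add: algebra_simps)
    ultimately have "real N * \<bar>frac (real b * z ^ i) - frac (real a * z ^ i)\<bar> < 1"
      by (simp add: abs_mult)
    hence "\<bar>frac (real b * z ^ i) - frac (real a * z ^ i)\<bar> < 1 / real N"
      using N by (simp add: pos_less_divide_eq mult.commute)
    moreover have "real (b - a) * z ^ i - real_of_int (y i) = frac (real b * z ^ i) - frac (real a * z ^ i)"
      using ab by (simp add: y_def frac_def of_nat_diff algebra_simps)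
    ultimately show "\<bar>real (b - a) * z ^ i - real_of_int (y i)\<bar> < 1 / real N" by simp
  qed
  moreover have "1 \<le> b - a" "b - a \<le> N ^ k" using ab b by auto
  ultimately show ?thesis by (intro exI[of _ "b - a"] exI[of _ y]) simp
qed

lemma hat1_lower:
  fixes z :: real
  assumes k: "k \<ge> 1" and eta: "\<eta> < 1 / real k"
  shows "\<forall>\<^sub>F X in at_top. has_indep_sols k 1 (veronese z) X \<eta>"
proof -
  define \<eta>' where "\<eta>' = max \<eta> 0"
  have eta': "\<eta>' < 1 / real k" "\<eta>' \<ge> 0" "\<eta> \<le> \<eta>'" using eta k by (auto simp: \<eta>'_def)
  define e where "e = 1 / real k - \<eta>'"
  have e: "e > 0" using eta' by (simp add: e_def)
  have "\<forall>\<^sub>F X in at_top. has_indep_sols k 1 (veronese z) X \<eta>'"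
    unfolding eventually_at_top_linorder
  proof (intro exI allI impI)
    fix X :: real assume X: "X \<ge> max 1 (2 powr (1/e))"
    have X1: "X \<ge> 1" using X by (rule order.trans[OF max.cobounded1])
    have X2: "X \<ge> 2 powr (1/e)" using X by (rule order.trans[OF max.cobounded2])
    have "(2 powr (1/e)) powr e \<le> X powr e" by (rule powr_mono2) (use e X2 in auto)
    hence Xe: "X powr e \<ge> 2" using e by (simp add: powr_powr)
    have Xeta: "X powr \<eta>' \<ge> 1" using X1 eta' by (simp add: ge_one_powr_ge_zero)
    have "X powr (1 / real k) = X powr \<eta>' * X powr e" using X1 by (simp add: e_def powr_add[symmetric])
    moreover have "X powr \<eta>' * 2 \<le> X powr \<eta>' * X powr e" using Xe by (intro mult_left_mono) auto
    ultimately have Xk: "X powr (1 / real k) \<ge> 2 * X powr \<eta>'" by simp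
    define N where "N = nat \<lfloor>X powr (1 / real k)\<rfloor>"
    have NX: "real N \<le> X powr (1 / real k)" using X1 by (simp add: N_def)
    have NX2: "real N \<ge> X powr \<eta>'" using Xk Xeta unfolding N_def by linarith
    hence N1: "N \<ge> 1" using Xeta by linarith
    have "real (N ^ k) \<le> (X powr (1 / real k)) ^ k" using NX by (simp add: power_mono)
    also have "\<dots> = X" using X1 k by (simp add: powr_realpow[symmetric] powr_powr)
    finally have NkX: "real (N ^ k) \<le> X" .
    have NXe: "1 / real N \<le> X powr (- \<eta>')"
      using NX2 Xeta X1 by (simp add: powr_minus divide_simps)
    obtain d :: nat and y :: "nat \<Rightarrow> int" where d: "1 \<le> d" "d \<le> N ^ k"
      and y: "\<forall>i\<in>{1..k}. \<bar>real d * z ^ i - real_of_int (y i)\<bar> < 1 / real N"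
      using dirichlet[OF N1, of k z] by blast
    define V where "V m t = (if t = 0 then int d else if t \<le> k then y t else 0)" for m t :: nat
    have "approx_sol k (veronese z) X \<eta>' (V 0)"
      unfolding approx_sol_def
    proof (intro conjI ballI allI impI)
      fix i assume "i > k" thus "V 0 i = 0" by (simp add: V_def)
    next
      have "real d \<le> real (N ^ k)" using d(2) by (rule of_nat_mono)
      hence "real d \<le> X" using NkX by linarith
      thus "\<bar>real_of_int (V 0 0)\<bar> \<le> X" by (simp add: V_def)
    next
      fix i assume i: "i \<in> {1..k}"
      have "\<bar>veronese z i * real_of_int (V 0 0) - real_of_int (V 0 i)\<bar> < 1 / real N"
        using y i by (auto simp: V_def veronese_def mult.commute)
      thus "\<bar>veronese z i * real_of_int (V 0 0) - real_of_int (V 0 i)\<bar> \<le> X powr - \<eta>'"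
        using NXe by linarith
    qed
    moreover have "lin_indep_int k 1 V"
      unfolding lin_indep_int_def
    proof (intro allI impI)
      fix c :: "nat \<Rightarrow> real" and m :: nat
      assume h: "\<forall>t\<le>k. (\<Sum>m<1. c m * real_of_int (V m t)) = 0" and m: "m < 1"
      have "c 0 * real d = 0" using h[rule_format, of 0] by (simp add: V_def)
      thus "c m = 0" using d m by simp
    qed
    ultimately show "has_indep_sols k 1 (veronese z) X \<eta>'"
      unfolding has_indep_sols_def by (intro exI[of _ V]) auto
  qed
  moreover have "\<forall>\<^sub>F X in at_top. (X::real) \<ge> 1" by (rule eventually_ge_at_top)
  ultimately show ?thesis
    by eventually_elim (rule has_indep_sols_mono[OF _ eta'(3)])
qed

definition Wv :: "nat \<Rightarrow> nat \<Rightarrow> nat \<Rightarrow> nat \<Rightarrow> int" where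
  "Wv k n a i = (if i \<le> k then int (qn n ^ (k - i) *
      (\<Sum>s\<le>a. (i choose s) * 2 ^ s * pn n ^ (i - s) * (qn n ^ n) ^ (a - s))) else 0)"

lemma Wv_real:
  assumes "i \<le> k"
  shows "real_of_int (Wv k n a i) = real (qn n) ^ (k - i) *
      (\<Sum>s\<le>a. real (i choose s) * 2 ^ s * real (pn n) ^ (i - s) * (real (qn n) ^ n) ^ a / (real (qn n) ^ n) ^ s)"
proof -
  have T0: "real (qn n) ^ n > 0" using qn_pos[of n] by simp
  have "real_of_int (Wv k n a i) = real (qn n) ^ (k - i) *
      (\<Sum>s\<le>a. real (i choose s) * 2 ^ s * real (pn n) ^ (i - s) * (real (qn n) ^ n) ^ (a - s))"
    using assms by (simp add: Wv_def)
  also have "(\<Sum>s\<le>a. real (i choose s) * 2 ^ s * real (pn n) ^ (i - s) * (real (qn n) ^ n) ^ (a - s))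
      = (\<Sum>s\<le>a. real (i choose s) * 2 ^ s * real (pn n) ^ (i - s) * (real (qn n) ^ n) ^ a / (real (qn n) ^ n) ^ s)"
  proof (rule sum.cong)
    fix s assume "s \<in> {..a}"
    hence "(real (qn n) ^ n) ^ (a - s) = (real (qn n) ^ n) ^ a / (real (qn n) ^ n) ^ s"
      using T0 by (simp add: power_diff)
    thus "real (i choose s) * 2 ^ s * real (pn n) ^ (i - s) * (real (qn n) ^ n) ^ (a - s)
        = real (i choose s) * 2 ^ s * real (pn n) ^ (i - s) * (real (qn n) ^ n) ^ a / (real (qn n) ^ n) ^ s"
      by simp
  qed simp
  finally show ?thesis .
qed

lemma Wv0: "real_of_int (Wv k n a 0) = real (qn n) ^ k * (real (qn n) ^ n) ^ a"
proof -
  have "(\<Sum>s\<le>a. (0 choose s) * 2 ^ s * pn n ^ (0 - s) * (qn n ^ n) ^ (a - s)) = (qn n ^ n) ^ a"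
    by (simp add: sum.atMost_shift)
  thus ?thesis by (simp add: Wv_def)
qed

lemma zs_Suc_eq: "zs (Suc n) = (real (pn n) * real (qn n) ^ n + 2) / (real (qn n) * real (qn n) ^ n)"
proof -
  have q0: "real (qn n) > 0" using qn_pos[of n] by simp
  have "zs (Suc n) = real (pn n) / real (qn n) + 2 / (real (qn n) * real (qn n) ^ n)"
    by (subst zs_Suc) (simp add: zs_eq qn_Suc)
  thus ?thesis using q0 by (simp add: field_simps)
qed

lemma Wv_close_rat:
  assumes n: "n \<ge> 1" and i: "i \<le> k" and a: "a \<le> k"
  shows "\<bar>real (qn n) ^ k * (real (qn n) ^ n) ^ a * zs (Suc n) ^ i - real_of_int (Wv k n a i)\<bar>
         \<le> 2 ^ k * real (qn n) ^ k / real (qn n) ^ n"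
proof -
  define q where "q = real (qn n)"
  define p where "p = real (pn n)"
  define T where "T = q ^ n"
  have q3: "q \<ge> 3" using qn_ge3[OF n] by (simp add: q_def)
  have T1: "T \<ge> 1" using q3 by (simp add: T_def one_le_power)
  have pq: "p + 2 \<le> 2 * q" using pn_lt_qn[of n] q3 unfolding p_def q_def by linarith
  have p0: "p \<ge> 0" by (simp add: p_def)
  define g where "g s = real (i choose s) * 2 ^ s * p ^ (i - s) * T ^ a / T ^ s" for s
  have g0: "g s \<ge> 0" for s using T1 p0 by (simp add: g_def)
  have gi: "s > i \<Longrightarrow> g s = 0" for s by (simp add: g_def)
  have "q ^ k * T ^ a * zs (Suc n) ^ i = q ^ k * T ^ a * (p * T + 2) ^ i / (q ^ i * T ^ i)"
    by (simp add: zs_Suc_eq q_def p_def T_def power_divide power_mult_distrib)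
  also have "(p * T + 2) ^ i = (\<Sum>s\<le>i. real (i choose s) * 2 ^ s * (p * T) ^ (i - s))"
    by (subst add.commute) (simp add: binomial_ring)
  also have "q ^ k * T ^ a * (\<Sum>s\<le>i. real (i choose s) * 2 ^ s * (p * T) ^ (i - s)) / (q ^ i * T ^ i)
      = q ^ (k - i) * (\<Sum>s\<le>i. g s)"
  proof -
    have qk: "q ^ k = q ^ (k - i) * q ^ i" using i by (simp add: power_add[symmetric])
    have "(\<Sum>s\<le>i. real (i choose s) * 2 ^ s * (p * T) ^ (i - s)) * T ^ a / T ^ i = (\<Sum>s\<le>i. g s)"
      unfolding sum_distrib_right sum_divide_distrib
    proof (rule sum.cong)
      fix s assume "s \<in> {..i}"
      hence si: "s \<le> i" by simp
      have "T ^ i = T ^ (i - s) * T ^ s" using si by (simp add: power_add[symmetric])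
      thus "real (i choose s) * 2 ^ s * (p * T) ^ (i - s) * T ^ a / T ^ i = g s"
        using T1 by (simp add: g_def power_mult_distrib field_simps)
    qed simp
    thus ?thesis using q3 T1 unfolding qk by (simp add: field_simps)
  qed
  also have "(\<Sum>s\<le>i. g s) = (\<Sum>s\<le>k. g s)"
    by (rule sum.mono_neutral_left) (use i gi in auto)
  also have "(\<Sum>s\<le>k. g s) = (\<Sum>s\<le>a. g s) + (\<Sum>s\<in>{a<..k}. g s)"
  proof -
    have "{..k} = {..a} \<union> {a<..k}" using a by auto
    hence "(\<Sum>s\<le>k. g s) = sum g ({..a} \<union> {a<..k})" by simp
    also have "\<dots> = sum g {..a} + sum g {a<..k}" by (rule sum.union_disjoint) auto
    finally show ?thesis .
  qed
  finally have ex: "q ^ k * T ^ a * zs (Suc n) ^ i = q ^ (k - i) * ((\<Sum>s\<le>a. g s) + (\<Sum>s\<in>{a<..k}. g s))" .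
  have W: "real_of_int (Wv k n a i) = q ^ (k - i) * (\<Sum>s\<le>a. g s)"
    using Wv_real[OF i, of n a] by (simp add: q_def p_def T_def g_def)
  have "(\<Sum>s\<in>{a<..k}. g s) \<le> (\<Sum>s\<in>{a<..k}. real (i choose s) * 2 ^ s * p ^ (i - s) / T)"
  proof (rule sum_mono)
    fix s assume "s \<in> {a<..k}"
    hence s: "s > a" by simp
    have "T ^ a / T ^ s \<le> 1 / T"
    proof -
      have Ts: "T ^ s = T ^ a * T ^ (s - a)" using s by (simp add: power_add[symmetric])
      have "T \<le> T ^ (s - a)" using power_increasing[of 1 "s - a" T] s T1 by simp
      hence "1 / T ^ (s - a) \<le> 1 / T" using T1 by (intro divide_left_mono) auto
      moreover have "T ^ a / T ^ s = 1 / T ^ (s - a)" unfolding Ts using T1 by simp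
      ultimately show ?thesis by simp
    qed
    hence "real (i choose s) * 2 ^ s * p ^ (i - s) * (T ^ a / T ^ s) \<le> real (i choose s) * 2 ^ s * p ^ (i - s) * (1 / T)"
      using p0 by (intro mult_left_mono) auto
    thus "g s \<le> real (i choose s) * 2 ^ s * p ^ (i - s) / T" by (simp add: g_def)
  qed
  also have "\<dots> \<le> (\<Sum>s\<le>k. real (i choose s) * 2 ^ s * p ^ (i - s) / T)"
    by (rule sum_mono2) (use p0 T1 in auto)
  also have "(\<Sum>s\<le>k. real (i choose s) * 2 ^ s * p ^ (i - s) / T) = (\<Sum>s\<le>i. real (i choose s) * 2 ^ s * p ^ (i - s)) / T"
    by (subst sum_divide_distrib[symmetric], rule arg_cong[where f="\<lambda>x. x / T"], rule sum.mono_neutral_right) (use i in auto)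
  also have "(\<Sum>s\<le>i. real (i choose s) * 2 ^ s * p ^ (i - s)) = (2 + p) ^ i"
    by (simp add: binomial_ring)
  finally have tail: "(\<Sum>s\<in>{a<..k}. g s) \<le> (2 + p) ^ i / T" .
  have tail0: "(\<Sum>s\<in>{a<..k}. g s) \<ge> 0" by (rule sum_nonneg) (simp add: g0)
  have "\<bar>q ^ k * T ^ a * zs (Suc n) ^ i - real_of_int (Wv k n a i)\<bar> = q ^ (k - i) * (\<Sum>s\<in>{a<..k}. g s)"
    using tail0 q3 unfolding ex W by (simp add: algebra_simps)
  also have "\<dots> \<le> q ^ (k - i) * ((2 + p) ^ i / T)"
    using tail q3 by (intro mult_left_mono) auto
  also have "q ^ (k - i) * ((2 + p) ^ i / T) \<le> q ^ (k - i) * ((2 * q) ^ i / T)"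
  proof -
    have "(2 + p) ^ i \<le> (2 * q) ^ i" using pq p0 by (intro power_mono) auto
    thus ?thesis using q3 T1 by (intro mult_left_mono divide_right_mono) auto
  qed
  also have "q ^ (k - i) * ((2 * q) ^ i / T) = 2 ^ i * q ^ k / T"
    using i by (simp add: power_mult_distrib power_add[symmetric] field_simps)
  also have "\<dots> \<le> 2 ^ k * q ^ k / T"
    using i q3 T1 by (intro divide_right_mono mult_right_mono power_increasing) auto
  finally show ?thesis by (simp add: q_def T_def)
qed

lemma Wv_close:
  assumes n: "n \<ge> 1" "n \<ge> k" and i: "i \<in> {1..k}" and a: "a \<le> k"
  shows "\<bar>zeta ^ i * real_of_int (Wv k n a 0) - real_of_int (Wv k n a i)\<bar>
         \<le> (2 ^ k + 3 * real k) * real (qn n) ^ k / real (qn n) ^ n"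
proof -
  define q where "q = real (qn n)"
  define T where "T = q ^ n"
  define x where "x = q ^ k * T ^ a"
  have q3: "q \<ge> 3" using qn_ge3[OF n(1)] by (simp add: q_def)
  have T1: "T \<ge> 1" using q3 by (simp add: T_def one_le_power)
  have x0: "x \<ge> 0" using q3 T1 by (simp add: x_def)
  have W0: "real_of_int (Wv k n a 0) = x" by (simp add: Wv0 x_def q_def T_def)
  have ik: "i \<le> k" using i by simp
  have c1: "\<bar>x * zs (Suc n) ^ i - real_of_int (Wv k n a i)\<bar> \<le> 2 ^ k * q ^ k / T"
    using Wv_close_rat[OF n(1) ik a] by (simp add: x_def q_def T_def)
  have "qn (Suc (Suc n)) = qn n ^ (Suc n * Suc (Suc n))"
    by (simp only: qn_Suc power_mult)
  hence QQ: "real (qn (Suc (Suc n))) = q ^ (Suc n * Suc (Suc n))"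
    by (simp only: q_def of_nat_power)
  have "x * T \<le> q ^ (Suc n * Suc (Suc n))"
  proof -
    have "x * T \<le> q ^ k * T ^ (k + 1)"
      unfolding x_def using T1 a q3 by (simp add: mult.assoc power_add[symmetric]) (intro mult_left_mono power_increasing, auto)
    also have "\<dots> = q ^ (k + n * (k + 1))" by (simp add: T_def power_add power_mult)
    also have "\<dots> \<le> q ^ (Suc n * Suc (Suc n))"
    proof (rule power_increasing)
      have "k + n * (k + 1) \<le> n + n * (n + 1)" using n(2) by (intro add_mono mult_left_mono) auto
      also have "\<dots> \<le> Suc n * Suc (Suc n)" by simp
      finally show "k + n * (k + 1) \<le> Suc n * Suc (Suc n)" .
    qed (use q3 in auto)
    finally show ?thesis .
  qed
  hence xQ: "x / real (qn (Suc (Suc n))) \<le> 1 / T"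
    using T1 q3 unfolding QQ by (simp add: field_simps)
  have "\<bar>(zeta ^ i - zs (Suc n) ^ i) * x\<bar> \<le> real i * (3 / real (qn (Suc (Suc n)))) * x"
    unfolding abs_mult abs_of_nonneg[OF x0] using x0 by (intro mult_right_mono zeta_pow_close)
  also have "\<dots> = 3 * real i * (x / real (qn (Suc (Suc n))))" by simp
  also have "\<dots> \<le> 3 * real k * (1 / T)"
    using ik xQ x0 qn_pos[of "Suc (Suc n)"] by (intro mult_mono) auto
  also have "\<dots> \<le> 3 * real k * q ^ k / T"
  proof -
    have "3 * real k * 1 \<le> 3 * real k * q ^ k" by (intro mult_left_mono one_le_power) (use q3 in auto)
    thus ?thesis using divide_right_mono[of "3 * real k * 1" "3 * real k * q ^ k" T] T1 by simp
  qed
  finally have c2: "\<bar>(zeta ^ i - zs (Suc n) ^ i) * x\<bar> \<le> 3 * real k * q ^ k / T" .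
  have "zeta ^ i * x - real_of_int (Wv k n a i)
      = (x * zs (Suc n) ^ i - real_of_int (Wv k n a i)) + (zeta ^ i - zs (Suc n) ^ i) * x"
    by (simp add: algebra_simps)
  hence "\<bar>zeta ^ i * x - real_of_int (Wv k n a i)\<bar> \<le> 2 ^ k * q ^ k / T + 3 * real k * q ^ k / T"
    using c1 c2 by linarith
  also have "\<dots> = (2 ^ k + 3 * real k) * q ^ k / T" by (simp add: add_divide_distrib distrib_right)
  finally show ?thesis by (simp add: W0 q_def T_def)
qed

lemma Wv_indep:
  assumes n: "n \<ge> 1" and j: "j \<le> k + 1"
  shows "lin_indep_int k j (Wv k n)"
  unfolding lin_indep_int_def
proof (intro allI impI)
  fix c :: "nat \<Rightarrow> real" and m :: nat
  assume h: "\<forall>t\<le>k. (\<Sum>m<j. c m * real_of_int (Wv k n m t)) = 0" and m: "m < j"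
  define q where "q = real (qn n)"
  define p where "p = real (pn n)"
  define T where "T = q ^ n"
  have q3: "q \<ge> 3" using qn_ge3[OF n] by (simp add: q_def)
  have T1: "T \<ge> 1" using q3 by (simp add: T_def one_le_power)
  define u where "u s t = real (t choose s) * 2 ^ s * p ^ (t - s)" for s t :: nat
  define d where "d s = (\<Sum>a\<in>{s..<j}. c a * T ^ (a - s))" for s
  have eq: "(\<Sum>s<j. u s t * d s) = 0" if t: "t \<le> k" for t
  proof -
    have Wt: "real_of_int (Wv k n a t) = q ^ (k - t) * (\<Sum>s\<le>a. u s t * T ^ (a - s))" for a
      using t by (simp add: Wv_def u_def q_def p_def T_def)
    have "0 = (\<Sum>a<j. c a * real_of_int (Wv k n a t))" using h t by simp
    also have "\<dots> = (\<Sum>a<j. q ^ (k - t) * (\<Sum>s<j. if s \<le> a then c a * u s t * T ^ (a - s) else 0))"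
      unfolding Wt
    proof (rule sum.cong)
      fix a assume a: "a \<in> {..<j}"
      have "(\<Sum>s\<le>a. c a * (u s t * T ^ (a - s))) = (\<Sum>s<j. if s \<le> a then c a * u s t * T ^ (a - s) else 0)"
      proof -
        have "(\<Sum>s<j. if s \<le> a then c a * u s t * T ^ (a - s) else 0) = (\<Sum>s\<in>{s\<in>{..<j}. s \<le> a}. c a * u s t * T ^ (a - s))"
          by (rule sum.inter_filter[symmetric]) simp
        also have "{s\<in>{..<j}. s \<le> a} = {..a}" using a by auto
        finally show ?thesis by (simp add: mult.assoc)
      qed
      moreover have "c a * (\<Sum>s\<le>a. u s t * T ^ (a - s)) = (\<Sum>s\<le>a. c a * (u s t * T ^ (a - s)))"
        by (rule sum_distrib_left)
      moreover have "c a * (q ^ (k - t) * (\<Sum>s\<le>a. u s t * T ^ (a - s))) = q ^ (k - t) * (c a * (\<Sum>s\<le>a. u s t * T ^ (a - s)))"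
        by (rule mult.left_commute)
      ultimately show "c a * (q ^ (k - t) * (\<Sum>s\<le>a. u s t * T ^ (a - s))) =
            q ^ (k - t) * (\<Sum>s<j. if s \<le> a then c a * u s t * T ^ (a - s) else 0)"
        by simp
    qed simp
    also have "\<dots> = q ^ (k - t) * (\<Sum>a<j. \<Sum>s<j. if s \<le> a then c a * u s t * T ^ (a - s) else 0)"
      by (simp only: sum_distrib_left)
    also have "(\<Sum>a<j. \<Sum>s<j. if s \<le> a then c a * u s t * T ^ (a - s) else 0)
        = (\<Sum>s<j. \<Sum>a<j. if s \<le> a then c a * u s t * T ^ (a - s) else 0)"
      by (rule sum.swap)
    also have "\<dots> = (\<Sum>s<j. u s t * d s)"
    proof (rule sum.cong)
      fix s assume s: "s \<in> {..<j}"
      have "(\<Sum>a<j. if s \<le> a then c a * u s t * T ^ (a - s) else 0) = (\<Sum>a\<in>{a\<in>{..<j}. s \<le> a}. c a * u s t * T ^ (a - s))"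
        by (rule sum.inter_filter[symmetric]) simp
      also have "{a\<in>{..<j}. s \<le> a} = {s..<j}" by auto
      finally show "(\<Sum>a<j. if s \<le> a then c a * u s t * T ^ (a - s) else 0) = u s t * d s"
        by (simp add: d_def sum_distrib_left algebra_simps)
    qed simp
    finally have "q ^ (k - t) * (\<Sum>s<j. u s t * d s) = 0" by simp
    thus ?thesis using q3 by simp
  qed
  have dz: "s < j \<longrightarrow> d s = 0" for s
  proof (induction s rule: less_induct)
    case (less s)
    show ?case
    proof
      assume s: "s < j"
      have "(\<Sum>s'<j. u s' s * d s') = (\<Sum>s'<j. if s' = s then 2 ^ s * d s else 0)"
      proof (rule sum.cong)
        fix s' assume s': "s' \<in> {..<j}"
        show "u s' s * d s' = (if s' = s then 2 ^ s * d s else 0)"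
        proof (cases "s' < s")
          case True then show ?thesis using less.IH s' by auto
        next
          case False
          show ?thesis
          proof (cases "s' = s")
            case True then show ?thesis by (simp add: u_def)
          next
            case False
            hence "s' > s" using \<open>\<not> s' < s\<close> by simp
            thus ?thesis by (simp add: u_def)
          qed
        qed
      qed simp
      also have "\<dots> = 2 ^ s * d s" using s by (simp add: sum.delta)
      finally have "2 ^ s * d s = 0" using eq[of s] s j by simp
      thus "d s = 0" by simp
    qed
  qed
  have dj: "d s = 0" if "s \<ge> j" for s using that by (simp add: d_def)
  have "d m = c m + T * d (Suc m)"
  proof -
    have "d m = c m + (\<Sum>a\<in>{Suc m..<j}. c a * T ^ (a - m))"
      using m by (simp add: d_def sum.atLeast_Suc_lessThan)
    also have "(\<Sum>a\<in>{Suc m..<j}. c a * T ^ (a - m)) = T * d (Suc m)"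
      unfolding d_def sum_distrib_left
    proof (rule sum.cong)
      fix a assume "a \<in> {Suc m..<j}"
      hence "a - m = Suc (a - Suc m)" by auto
      thus "c a * T ^ (a - m) = T * (c a * T ^ (a - Suc m))" by simp
    qed simp
    finally show ?thesis .
  qed
  moreover have "d m = 0" using dz m by blast
  moreover have "d (Suc m) = 0" using dz dj by (cases "Suc m < j") auto
  ultimately show "c m = 0" by simp
qed

lemma minor_exists:
  fixes V :: "nat \<Rightarrow> nat \<Rightarrow> real"
  assumes "\<forall>c. (\<forall>t\<le>k. (\<Sum>m<j. c m * V m t) = 0) \<longrightarrow> (\<forall>m<j. c m = 0)"
  shows "\<exists>\<sigma>. inj_on \<sigma> {..<j} \<and> \<sigma> ` {..<j} \<subseteq> {..k} \<and> det (mat j j (\<lambda>(m,l). V m (\<sigma> l))) \<noteq> 0"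
  using assms
proof (induction j)
  case 0
  show ?case by (auto simp: det_def)
next
  case (Suc j)
  have "\<forall>c. (\<forall>t\<le>k. (\<Sum>m<j. c m * V m t) = 0) \<longrightarrow> (\<forall>m<j. c m = 0)"
  proof (rule allI, rule impI)
    fix c :: "nat \<Rightarrow> real"
    assume h: "\<forall>t\<le>k. (\<Sum>m<j. c m * V m t) = 0"
    define c' where "c' m = (if m < j then c m else 0)" for m
    have "\<forall>t\<le>k. (\<Sum>m<Suc j. c' m * V m t) = 0" using h by (simp add: c'_def)
    hence *: "\<forall>m<Suc j. c' m = 0" using Suc.prems by blast
    show "\<forall>m<j. c m = 0"
    proof (intro allI impI)
      fix m assume m: "m < j"
      hence "c' m = 0" using * by simp
      thus "c m = 0" using m by (simp add: c'_def)
    qed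
  qed
  from Suc.IH[OF this] obtain \<sigma> where \<sigma>: "inj_on \<sigma> {..<j}" "\<sigma> ` {..<j} \<subseteq> {..k}"
    and d0: "det (mat j j (\<lambda>(m,l). V m (\<sigma> l))) \<noteq> 0" by blast
  define M where "M t = mat (Suc j) (Suc j) (\<lambda>(m,l). V m (if l < j then \<sigma> l else t))" for t
  have Mc: "M t \<in> carrier_mat (Suc j) (Suc j)" for t by (simp add: M_def)
  have del: "mat_delete (M t) i j = mat_delete (M 0) i j" for t i
    by (rule eq_matI) (auto simp: mat_delete_def M_def)
  define cf where "cf i = cofactor (M 0) i j" for i
  have detM: "det (M t) = (\<Sum>i<Suc j. cf i * V i t)" for t
  proof -
    have "det (M t) = (\<Sum>i<Suc j. M t $$ (i,j) * cofactor (M t) i j)"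
      by (rule laplace_expansion_column[OF Mc]) simp
    also have "\<dots> = (\<Sum>i<Suc j. cf i * V i t)"
    proof (rule sum.cong)
      fix i assume "i \<in> {..<Suc j}"
      hence "M t $$ (i,j) = V i t" by (simp add: M_def)
      moreover have "cofactor (M t) i j = cf i" unfolding cf_def cofactor_def using del[of t i] by simp
      ultimately show "M t $$ (i,j) * cofactor (M t) i j = cf i * V i t" by simp
    qed simp
    finally show ?thesis .
  qed
  have "mat_delete (M 0) j j = mat j j (\<lambda>(m,l). V m (\<sigma> l))"
    by (rule eq_matI) (auto simp: mat_delete_def M_def)
  hence cfj: "cf j \<noteq> 0" using d0 by (simp add: cf_def cofactor_def)
  have "\<exists>t\<le>k. det (M t) \<noteq> 0"
  proof (rule ccontr)
    assume "\<not> ?thesis"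
    hence "\<forall>t\<le>k. (\<Sum>m<Suc j. cf m * V m t) = 0" by (simp add: detM)
    hence "\<forall>m<Suc j. cf m = 0" using Suc.prems by blast
    with cfj show False by simp
  qed
  then obtain t where t: "t \<le> k" "det (M t) \<noteq> 0" by blast
  have tn: "t \<notin> \<sigma> ` {..<j}"
  proof
    assume "t \<in> \<sigma> ` {..<j}"
    then obtain l where l: "l < j" "\<sigma> l = t" by auto
    have "det (M t) = 0"
      by (rule det_identical_columns[OF Mc, of l j]) (use l in \<open>auto simp: M_def\<close>)
    with t show False by simp
  qed
  define \<sigma>' where "\<sigma>' = \<sigma>(j := t)"
  have "inj_on \<sigma>' {..<Suc j}"
    using \<sigma>(1) tn unfolding \<sigma>'_def inj_on_def by (auto simp: less_Suc_eq)
  moreover have "\<sigma>' ` {..<Suc j} \<subseteq> {..k}"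
    using \<sigma>(2) t(1) unfolding \<sigma>'_def by (auto simp: less_Suc_eq image_subset_iff)
  moreover have "mat (Suc j) (Suc j) (\<lambda>(m,l). V m (\<sigma>' l)) = M t"
    by (rule eq_matI) (auto simp: M_def \<sigma>'_def)
  ultimately show ?case using t(2) by metis
qed

lemma det_bound:
  fixes A :: "real mat"
  assumes A: "A \<in> carrier_mat n n" and n: "n \<ge> 1"
    and b0: "\<forall>m<n. \<bar>A $$ (m,0)\<bar> \<le> b0"
    and b: "\<forall>m<n. \<forall>l<n. l \<noteq> 0 \<longrightarrow> \<bar>A $$ (m,l)\<bar> \<le> b"
  shows "\<bar>det A\<bar> \<le> fact n * (b0 * b ^ (n - 1))"
proof -
  let ?P = "{p. p permutes {0..<n}}"
  have "\<bar>det A\<bar> = \<bar>\<Sum>p\<in>?P. signof p * (\<Prod>l<n. A $$ (p l, l))\<bar>"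
    by (simp add: det_col[OF A])
  also have "\<dots> \<le> (\<Sum>p\<in>?P. \<bar>signof p * (\<Prod>l<n. A $$ (p l, l))\<bar>)"
    by (rule sum_abs)
  also have "\<dots> \<le> (\<Sum>p\<in>?P. b0 * b ^ (n - 1))"
  proof (rule sum_mono)
    fix p assume "p \<in> ?P"
    hence p: "p permutes {0..<n}" by simp
    have pl: "l < n \<Longrightarrow> p l < n" for l using permutes_in_image[OF p, of l] by simp
    have "\<bar>signof p * (\<Prod>l<n. A $$ (p l, l))\<bar> = (\<Prod>l<n. \<bar>A $$ (p l, l)\<bar>)"
      by (simp add: abs_mult sign_def abs_prod)
    also have "\<dots> \<le> (\<Prod>l<n. if l = 0 then b0 else b)"
      by (rule prod_mono) (use b0 b pl in auto)
    also have "\<dots> = b0 * b ^ (n - 1)"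
    proof -
      obtain m where m: "n = Suc m" using n by (cases n) auto
      show ?thesis unfolding m by (subst prod.lessThan_Suc_shift) simp
    qed
    finally show "\<bar>signof p * (\<Prod>l<n. A $$ (p l, l))\<bar> \<le> b0 * b ^ (n - 1)" .
  qed
  also have "\<dots> = fact n * (b0 * b ^ (n - 1))"
    by (simp add: card_permutations[of "{0..<n}" n])
  finally show ?thesis .
qed

lemma det_colop:
  fixes A :: "real mat"
  assumes A: "A \<in> carrier_mat n n" and c0: "c 0 = 0"
  shows "det (mat n n (\<lambda>(m,l). A $$ (m,l) - c l * A $$ (m,0))) = det A"
proof -
  define U where "U = mat n n (\<lambda>(a,b). (if a = b then 1 else 0) - (if a = 0 then c b else (0::real)))"
  have U: "U \<in> carrier_mat n n" by (simp add: U_def)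
  have "upper_triangular U" by (auto simp: upper_triangular_def U_def)
  hence "det U = prod_list (diag_mat U)" by (rule det_upper_triangular[OF _ U])
  also have "diag_mat U = map (\<lambda>i. 1) [0..<n]"
    by (auto simp: diag_mat_def U_def c0 intro!: map_cong)
  also have "map (\<lambda>i. 1) [0..<n] = replicate n (1::real)" by (simp add: map_replicate_const)
  finally have dU: "det U = 1" by simp
  have "mat n n (\<lambda>(m,l). A $$ (m,l) - c l * A $$ (m,0)) = A * U"
  proof (rule eq_matI)
    fix m l assume m: "m < dim_row (A * U)" and l: "l < dim_col (A * U)"
    hence mn: "m < n" and ln: "l < n" using A U by auto
    have "(A * U) $$ (m,l) = (\<Sum>b\<in>{0..<n}. A $$ (m,b) * ((if b = l then 1 else 0) - (if b = 0 then c l else 0)))"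
    proof -
      have "(A * U) $$ (m,l) = row A m \<bullet> col U l" using A U mn ln by (simp add: index_mult_mat)
      also have "\<dots> = (\<Sum>b\<in>{0..<n}. A $$ (m,b) * U $$ (b,l))"
        using A U mn ln unfolding scalar_prod_def by (intro sum.cong) auto
      also have "\<dots> = (\<Sum>b\<in>{0..<n}. A $$ (m,b) * ((if b = l then 1 else 0) - (if b = 0 then c l else 0)))"
        using ln by (intro sum.cong) (auto simp: U_def)
      finally show ?thesis .
    qed
    also have "\<dots> = (\<Sum>b\<in>{0..<n}. (if b = l then A $$ (m,b) else 0) - (if b = 0 then c l * A $$ (m,b) else 0))"
      by (rule sum.cong) (auto simp: c0)
    also have "\<dots> = (\<Sum>b\<in>{0..<n}. (if b = l then A $$ (m,b) else 0)) - (\<Sum>b\<in>{0..<n}. (if b = 0 then c l * A $$ (m,b) else 0))"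
      by (rule sum_subtractf)
    also have "\<dots> = A $$ (m,l) - c l * A $$ (m,0)"
      using ln by (simp add: sum.delta)
    finally show "mat n n (\<lambda>(m,l). A $$ (m,l) - c l * A $$ (m,0)) $$ (m,l) = (A * U) $$ (m,l)"
      using mn ln by simp
  qed (use A U in auto)
  also have "det (A * U) = det A" using det_mult[OF A U] dU by simp
  finally show ?thesis .
qed

lemma upper_main:
  fixes z X \<delta> :: real and V :: "nat \<Rightarrow> nat \<Rightarrow> int"
  assumes z: "2/3 \<le> z" "z \<le> 1" and j: "j \<ge> 1"
    and X: "X \<ge> 0" and \<delta>: "0 \<le> \<delta>"
    and sol: "\<forall>m<j. \<bar>V m 0\<bar> \<le> X \<and> (\<forall>i\<in>{1..k}. \<bar>z ^ i * V m 0 - V m i\<bar> \<le> \<delta>)"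
    and li: "lin_indep_int k j V"
  shows "1 \<le> fact j * ((X + \<delta>) * (\<delta> * (1 + (3/2) ^ k)) ^ (j - 1))"
proof -
  have "\<forall>c. (\<forall>t\<le>k. (\<Sum>m<j. c m * real_of_int (V m t)) = 0) \<longrightarrow> (\<forall>m<j. c m = 0)"
    using li by (simp add: lin_indep_int_def)
  from minor_exists[OF this] obtain \<sigma> where \<sigma>: "inj_on \<sigma> {..<j}" "\<sigma> ` {..<j} \<subseteq> {..k}"
    and d: "det (mat j j (\<lambda>(m,l). real_of_int (V m (\<sigma> l)))) \<noteq> 0" by blast
  have \<sigma>k: "l < j \<Longrightarrow> \<sigma> l \<le> k" for l using \<sigma>(2) by auto
  define A where "A = mat j j (\<lambda>(m,l). real_of_int (V m (\<sigma> l)))"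
  define Ai where "Ai = mat j j (\<lambda>(m,l). V m (\<sigma> l))"
  have AAi: "A = of_int_hom.mat_hom Ai" by (rule eq_matI) (auto simp: A_def Ai_def)
  have dA: "det A = of_int (det Ai)" unfolding AAi by (rule of_int_hom.hom_det)
  have "det Ai \<noteq> 0" using d dA by (simp add: A_def)
  hence dA1: "1 \<le> \<bar>det A\<bar>" using dA by linarith
  have Ac: "A \<in> carrier_mat j j" by (simp add: A_def)
  define E where "E m t = z ^ t * real_of_int (V m 0) - real_of_int (V m t)" for m t
  have E0: "E m 0 = 0" for m by (simp add: E_def)
  have Eb: "m < j \<Longrightarrow> t \<le> k \<Longrightarrow> \<bar>E m t\<bar> \<le> \<delta>" for m t
    using sol \<delta> by (cases "t = 0") (auto simp: E_def E0)
  have zt: "0 < z ^ t" "z ^ t \<le> 1" for t using z by (auto simp: power_le_one)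
  have Vb: "m < j \<Longrightarrow> t \<le> k \<Longrightarrow> \<bar>real_of_int (V m t)\<bar> \<le> X + \<delta>" for m t
  proof -
    assume m: "m < j" and t: "t \<le> k"
    have "real_of_int (V m t) = z ^ t * real_of_int (V m 0) - E m t" by (simp add: E_def)
    moreover have "\<bar>z ^ t * real_of_int (V m 0)\<bar> \<le> X"
    proof -
      have "\<bar>z ^ t * real_of_int (V m 0)\<bar> = z ^ t * \<bar>real_of_int (V m 0)\<bar>" using zt[of t] by (simp add: abs_mult)
      also have "\<dots> \<le> 1 * \<bar>real_of_int (V m 0)\<bar>" by (rule mult_right_mono) (use zt[of t] in auto)
      also have "\<dots> \<le> X" using sol m by simp
      finally show ?thesis .
    qed
    ultimately show ?thesis using Eb[OF m t] by linarith
  qed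
  define c where "c l = (if l = 0 then 0 else z ^ \<sigma> l / z ^ \<sigma> 0)" for l
  have cb: "\<bar>c l\<bar> \<le> (3/2) ^ k" if l: "l < j" for l
  proof -
    have s0: "\<sigma> 0 \<le> k" using \<sigma>k j by auto
    have "(2/3) ^ \<sigma> 0 \<le> z ^ \<sigma> 0" using z by (intro power_mono) auto
    moreover have "(2/3::real) ^ k \<le> (2/3) ^ \<sigma> 0" using s0 by (intro power_decreasing) auto
    ultimately have "(2/3::real) ^ k \<le> z ^ \<sigma> 0" by linarith
    hence "1 / z ^ \<sigma> 0 \<le> 1 / (2/3) ^ k" by (intro divide_left_mono) (auto simp: zt)
    also have "\<dots> = (3/2) ^ k" by (simp add: power_divide)
    finally have "1 / z ^ \<sigma> 0 \<le> (3/2) ^ k" .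
    moreover have "\<bar>c l\<bar> \<le> 1 / z ^ \<sigma> 0"
      using zt[of "\<sigma> l"] zt[of "\<sigma> 0"] by (auto simp: c_def divide_right_mono)
    ultimately show ?thesis by linarith
  qed
  define B where "B = mat j j (\<lambda>(m,l). A $$ (m,l) - c l * A $$ (m,0))"
  have dB: "det B = det A" unfolding B_def by (rule det_colop[OF Ac]) (simp add: c_def)
  have Bc: "B \<in> carrier_mat j j" by (simp add: B_def)
  have "\<bar>det B\<bar> \<le> fact j * ((X + \<delta>) * (\<delta> * (1 + (3/2) ^ k)) ^ (j - 1))"
  proof (rule det_bound[OF Bc j])
    show "\<forall>m<j. \<bar>B $$ (m,0)\<bar> \<le> X + \<delta>"
      using j Vb \<sigma>k by (auto simp: B_def A_def c_def)
    show "\<forall>m<j. \<forall>l<j. l \<noteq> 0 \<longrightarrow> \<bar>B $$ (m,l)\<bar> \<le> \<delta> * (1 + (3/2) ^ k)"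
    proof (intro allI impI)
      fix m l assume m: "m < j" and l: "l < j" and l0: "l \<noteq> 0"
      have j0: "0 < j" using j by simp
      have "B $$ (m,l) = real_of_int (V m (\<sigma> l)) - c l * real_of_int (V m (\<sigma> 0))"
        using m l j0 by (simp add: B_def A_def)
      also have "\<dots> = c l * E m (\<sigma> 0) - E m (\<sigma> l)"
      proof -
        have nz: "z ^ \<sigma> 0 \<noteq> 0" using z by simp
        show ?thesis using l0 nz by (simp add: E_def c_def field_simps)
      qed
      finally have "\<bar>B $$ (m,l)\<bar> \<le> \<bar>c l\<bar> * \<bar>E m (\<sigma> 0)\<bar> + \<bar>E m (\<sigma> l)\<bar>"
        by (simp add: abs_mult[symmetric] abs_triangle_ineq4)
      also have "\<dots> \<le> (3/2) ^ k * \<delta> + \<delta>"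
        by (intro add_mono mult_mono cb l Eb m \<sigma>k j0) auto
      finally show "\<bar>B $$ (m,l)\<bar> \<le> \<delta> * (1 + (3/2) ^ k)" by (simp add: algebra_simps)
    qed
  qed
  thus ?thesis using dA1 dB by linarith
qed

lemma lambda_upper:
  fixes z \<eta> :: real
  assumes z: "2/3 \<le> z" "z \<le> 1" and j: "j \<ge> 2" and eta: "\<eta> > 1 / (real j - 1)"
  shows "\<not> (\<exists>\<^sub>F X in at_top. has_indep_sols k j (veronese z) X \<eta>)"
proof -
  define e where "e = \<eta> * (real j - 1) - 1"
  have j1: "real j - 1 > 0" using j by simp
  have e: "e > 0" using eta j1 by (simp add: e_def field_simps)
  have eta0: "\<eta> > 0" using eta j1 by (smt (verit) divide_pos_pos)
  define C where "C = 2 * fact j * (1 + (3/2::real) ^ k) ^ (j - 1)"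
  have C: "C > 0" unfolding C_def
    by (intro mult_pos_pos zero_less_power) (auto simp: add_pos_pos)
  have "\<forall>\<^sub>F X in at_top. \<not> has_indep_sols k j (veronese z) X \<eta>"
    unfolding eventually_at_top_linorder
  proof (intro exI allI impI)
    fix X :: real assume X: "X \<ge> max 1 (C powr (1/e) + 1)"
    have X1: "X \<ge> 1" using X by (rule order.trans[OF max.cobounded1])
    have "X \<ge> C powr (1/e) + 1" using X by (rule order.trans[OF max.cobounded2])
    hence XC: "X > C powr (1/e)" by simp
    show "\<not> has_indep_sols k j (veronese z) X \<eta>"
    proof
      assume "has_indep_sols k j (veronese z) X \<eta>"
      then obtain V where V: "\<forall>m<j. approx_sol k (veronese z) X \<eta> (V m)" and li: "lin_indep_int k j V"
        unfolding has_indep_sols_def by blast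
      define \<delta> where "\<delta> = X powr (- \<eta>)"
      have d0: "\<delta> \<ge> 0" by (simp add: \<delta>_def)
      have d1: "\<delta> \<le> 1" unfolding \<delta>_def using X1 eta0 by (simp add: powr_minus divide_simps ge_one_powr_ge_zero)
      have sol: "\<forall>m<j. \<bar>V m 0\<bar> \<le> X \<and> (\<forall>i\<in>{1..k}. \<bar>z ^ i * V m 0 - V m i\<bar> \<le> \<delta>)"
        using V by (auto simp: approx_sol_def veronese_def \<delta>_def)
      have "1 \<le> fact j * ((X + \<delta>) * (\<delta> * (1 + (3/2) ^ k)) ^ (j - 1))"
        by (rule upper_main[OF z _ _ d0 sol li]) (use j X1 in auto)
      also have "\<dots> \<le> fact j * ((2 * X) * (\<delta> * (1 + (3/2) ^ k)) ^ (j - 1))"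
        using d0 d1 X1 by (intro mult_left_mono mult_right_mono) auto
      also have "\<dots> = C * (X * \<delta> ^ (j - 1))"
        by (simp add: C_def power_mult_distrib)
      also have "\<delta> ^ (j - 1) = X powr (- \<eta> * (real j - 1))"
        unfolding \<delta>_def using X1 j by (simp add: powr_realpow[symmetric] powr_powr of_nat_diff)
      also have "X * X powr (- \<eta> * (real j - 1)) = X powr (1 + (- \<eta> * (real j - 1)))"
        using X1 by (subst powr_add) simp
      also have "1 + (- \<eta> * (real j - 1)) = - e" by (simp add: e_def algebra_simps)
      finally have "1 \<le> C * X powr (- e)" .
      hence "X powr e \<le> C" using X1 by (simp add: powr_minus divide_simps)
      moreover have "C < X powr e"
      proof -
        have "(C powr (1/e)) powr e < X powr e"
          by (rule powr_less_mono2[OF e _ XC]) simp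
        thus ?thesis using C e by (simp add: powr_powr)
      qed
      ultimately show False by simp
    qed
  qed
  thus ?thesis by (simp add: not_frequently)
qed

lemma lambda_lower:
  assumes k: "k \<ge> 1" and j: "1 \<le> j" "j \<le> k + 1" and eta: "j = 1 \<or> \<eta> * (real j - 1) < 1"
  shows "\<exists>\<^sub>F X in at_top. has_indep_sols k j (veronese zeta) X \<eta>"
proof (rule frequently_at_topI)
  fix N :: real
  define \<eta>' where "\<eta>' = max \<eta> 0"
  have e0: "\<eta>' \<ge> 0" "\<eta> \<le> \<eta>'" by (auto simp: \<eta>'_def)
  define \<epsilon> where "\<epsilon> = 1 - \<eta>' * (real j - 1)"
  have eps: "\<epsilon> > 0"
  proof (cases "j = 1")
    case True then show ?thesis by (simp add: \<epsilon>_def)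
  next
    case False
    hence "\<eta> * (real j - 1) < 1" "real j - 1 \<ge> 0" using eta j by auto
    thus ?thesis unfolding \<epsilon>_def \<eta>'_def by (cases "\<eta> \<le> 0") (auto simp: max_def)
  qed
  define C where "C = 2 ^ k + 3 * real k"
  define n where "n = max k (max (nat \<lceil>C\<rceil>) (max (nat \<lceil>N\<rceil>) (max (nat \<lceil>(1 + real k * (1 + \<eta>')) / \<epsilon>\<rceil>) 1)))"
  have n1: "n \<ge> 1" "n \<ge> k" unfolding n_def by (simp_all add: le_max_iff_disj)
  have nC: "real n \<ge> C" unfolding n_def by linarith
  have nN: "real n \<ge> N" unfolding n_def by linarith
  have nE: "real n \<ge> (1 + real k * (1 + \<eta>')) / \<epsilon>" unfolding n_def by linarith
  define q where "q = real (qn n)"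
  define T where "T = q ^ n"
  define X where "X = q ^ k * T ^ (j - 1)"
  have qn: "q \<ge> real n" unfolding q_def by (rule qn_ge_n)
  have q3: "q \<ge> 3" using qn_ge3[OF n1(1)] by (simp add: q_def)
  have T1: "T \<ge> 1" using q3 by (simp add: T_def one_le_power)
  have "q \<le> q ^ k" using power_increasing[of 1 k q] q3 k by simp
  also have "q ^ k \<le> X"
  proof -
    have "q ^ k * 1 \<le> q ^ k * T ^ (j - 1)" using T1 q3 by (intro mult_left_mono one_le_power) auto
    thus ?thesis by (simp add: X_def)
  qed
  finally have qX: "q \<le> X" .
  hence XN: "X \<ge> N" using qn nN by linarith
  have X1: "X \<ge> 1" using qX q3 by linarith
  define E where "E = real n * \<epsilon> - real k * (1 + \<eta>')"
  have E1: "E \<ge> 1" using nE eps by (simp add: E_def field_simps)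
  have Xp: "X = q powr (real k + real n * (real j - 1))"
  proof -
    have "X = q ^ (k + n * (j - 1))" by (simp add: X_def T_def power_add power_mult)
    also have "\<dots> = q powr (real (k + n * (j - 1)))" by (rule powr_realpow[symmetric]) (use q3 in auto)
    also have "real (k + n * (j - 1)) = real k + real n * (real j - 1)" using j by (simp add: of_nat_diff)
    finally show ?thesis .
  qed
  have err: "C * q ^ k / T \<le> X powr (- \<eta>')"
  proof -
    have qkT: "q ^ k / T = q powr (real k - real n)"
      using q3 by (simp add: T_def powr_diff powr_realpow)
    have "X powr (- \<eta>') = q powr (- \<eta>' * (real k + real n * (real j - 1)))"
      using q3 by (simp add: Xp powr_powr mult.commute)
    also have "- \<eta>' * (real k + real n * (real j - 1)) = (real k - real n) + E"
      by (simp add: E_def \<epsilon>_def algebra_simps)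
    also have "q powr ((real k - real n) + E) = q powr (real k - real n) * q powr E"
      by (rule powr_add)
    finally have XE: "X powr (- \<eta>') = q powr (real k - real n) * q powr E" .
    have "C \<le> q" using nC qn by linarith
    also have "q = q powr 1" using q3 by simp
    also have "q powr 1 \<le> q powr E" using q3 E1 by (intro powr_mono) auto
    finally have "C \<le> q powr E" .
    hence "q powr (real k - real n) * C \<le> q powr (real k - real n) * q powr E"
      by (intro mult_left_mono) auto
    moreover have "C * q ^ k / T = C * (q ^ k / T)" by simp
    ultimately show ?thesis unfolding XE qkT by (simp add: mult.commute)
  qed
  have "has_indep_sols k j (veronese zeta) X \<eta>'"
    unfolding has_indep_sols_def
  proof (intro exI conjI allI impI)
    show "lin_indep_int k j (Wv k n)" by (rule Wv_indep[OF n1(1) j(2)])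
  next
    fix m assume m: "m < j"
    have mk: "m \<le> k" using m j by simp
    show "approx_sol k (veronese zeta) X \<eta>' (Wv k n m)"
      unfolding approx_sol_def
    proof (intro conjI ballI allI impI)
      fix i assume "i > k" thus "Wv k n m i = 0" by (simp add: Wv_def)
    next
      have "T ^ m \<le> T ^ (j - 1)" using m T1 by (intro power_increasing) auto
      hence "q ^ k * T ^ m \<le> X" unfolding X_def using q3 by (intro mult_left_mono) auto
      thus "\<bar>real_of_int (Wv k n m 0)\<bar> \<le> X" using q3 T1 by (simp add: Wv0 q_def[symmetric] T_def[symmetric])
    next
      fix i assume i: "i \<in> {1..k}"
      have "\<bar>zeta ^ i * real_of_int (Wv k n m 0) - real_of_int (Wv k n m i)\<bar> \<le> C * q ^ k / T"
        using Wv_close[OF n1 i mk] by (simp add: C_def q_def T_def)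
      thus "\<bar>veronese zeta i * real_of_int (Wv k n m 0) - real_of_int (Wv k n m i)\<bar> \<le> X powr - \<eta>'"
        using err by (simp add: veronese_def)
    qed
  qed
  hence "has_indep_sols k j (veronese zeta) X \<eta>" by (rule has_indep_sols_mono[OF _ e0(2) X1])
  thus "\<exists>X\<ge>N. has_indep_sols k j (veronese zeta) X \<eta>" using XN by blast
qed

lemma Sup_eq_from:
  assumes lo: "\<And>\<eta>. \<eta> < L \<Longrightarrow> P \<eta>" and hi: "\<And>\<eta>. \<eta> > L \<Longrightarrow> \<not> P \<eta>"
  shows "Sup {ereal \<eta> | \<eta>. P \<eta>} = ereal L"
proof (rule antisym)
  show "Sup {ereal \<eta> | \<eta>. P \<eta>} \<le> ereal L"
  proof (rule Sup_least)
    fix x assume "x \<in> {ereal \<eta> | \<eta>. P \<eta>}"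
    then obtain \<eta> where "x = ereal \<eta>" "P \<eta>" by auto
    thus "x \<le> ereal L" using hi by (cases "\<eta> \<le> L") auto
  qed
  show "ereal L \<le> Sup {ereal \<eta> | \<eta>. P \<eta>}"
  proof (rule ccontr)
    assume "\<not> ?thesis"
    hence "Sup {ereal \<eta> | \<eta>. P \<eta>} < ereal L" by simp
    then obtain r where r: "Sup {ereal \<eta> | \<eta>. P \<eta>} < ereal r" "ereal r < ereal L"
      using ereal_dense2 by blast
    hence "P r" using lo by simp
    hence "ereal r \<le> Sup {ereal \<eta> | \<eta>. P \<eta>}" by (intro Sup_upper) auto
    with r(1) show False by simp
  qed
qed

lemma Sup_eq_inf:
  assumes "\<And>\<eta>. P \<eta>"
  shows "Sup {ereal \<eta> | \<eta>. P \<eta>} = \<infinity>"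
proof (rule ccontr)
  assume "Sup {ereal \<eta> | \<eta>. P \<eta>} \<noteq> \<infinity>"
  then obtain m :: nat where m: "Sup {ereal \<eta> | \<eta>. P \<eta>} < ereal (real m)"
    using less_PInf_Ex_of_nat by blast
  have "ereal (real m) \<le> Sup {ereal \<eta> | \<eta>. P \<eta>}" using assms by (intro Sup_upper) auto
  with m show False by simp
qed

theorem corollary15:
  fixes \<zeta> :: real
  assumes "\<zeta> = 2 * (\<Sum>l. 1 / 3 ^ fact (Suc l))"
  shows "\<zeta> \<in> cantor_set \<and>
    (\<forall>k::nat. k \<ge> 1 \<longrightarrow>
      (\<forall>j\<in>{1..k+1}. lambda_kj k j (veronese \<zeta>) =
          (if j = 1 then \<infinity> else ereal (1 / (real j - 1)))) \<and>
      lambda_hat_kj k 1 (veronese \<zeta>) = ereal (1 / real k) \<and>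
      (\<forall>j\<in>{2..k+1}. lambda_hat_kj k j (veronese \<zeta>) = 0))"
proof -
  have z: "\<zeta> = zeta" using assms by (simp add: zeta_def)
  have zb: "2/3 \<le> zeta" "zeta \<le> 1" using zeta_ge zeta_le1 by auto
  have part: "(\<forall>j\<in>{1..k+1}. lambda_kj k j (veronese zeta) =
          (if j = 1 then \<infinity> else ereal (1 / (real j - 1)))) \<and>
      lambda_hat_kj k 1 (veronese zeta) = ereal (1 / real k) \<and>
      (\<forall>j\<in>{2..k+1}. lambda_hat_kj k j (veronese zeta) = 0)" if k: "k \<ge> 1" for k
  proof (intro conjI ballI)
    fix j assume j: "j \<in> {1..k+1}"
    show "lambda_kj k j (veronese zeta) = (if j = 1 then \<infinity> else ereal (1 / (real j - 1)))"
    proof (cases "j = 1")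
      case True
      thus ?thesis unfolding lambda_kj_def
        by (simp, intro Sup_eq_inf lambda_lower[OF k]) (use j in auto)
    next
      case False
      hence j2: "j \<ge> 2" using j by auto
      have j1: "real j - 1 > 0" using j2 by simp
      have "Sup {ereal \<eta> | \<eta>. \<exists>\<^sub>F X in at_top. has_indep_sols k j (veronese zeta) X \<eta>} = ereal (1 / (real j - 1))"
      proof (rule Sup_eq_from)
        fix \<eta> assume "\<eta> < 1 / (real j - 1)"
        hence "\<eta> * (real j - 1) < 1" using j1 by (simp add: field_simps)
        thus "\<exists>\<^sub>F X in at_top. has_indep_sols k j (veronese zeta) X \<eta>"
          by (intro lambda_lower[OF k]) (use j in auto)
      next
        fix \<eta> assume "\<eta> > 1 / (real j - 1)"
        thus "\<not> (\<exists>\<^sub>F X in at_top. has_indep_sols k j (veronese zeta) X \<eta>)"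
          by (rule lambda_upper[OF zb j2])
      qed
      thus ?thesis using False by (simp add: lambda_kj_def)
    qed
  next
    show "lambda_hat_kj k 1 (veronese zeta) = ereal (1 / real k)"
      unfolding lambda_hat_kj_def
    proof (rule Sup_eq_from)
      fix \<eta> assume "\<eta> < 1 / real k"
      thus "\<forall>\<^sub>F X in at_top. has_indep_sols k 1 (veronese zeta) X \<eta>" by (rule hat1_lower[OF k])
    next
      fix \<eta> assume "\<eta> > 1 / real k"
      thus "\<not> (\<forall>\<^sub>F X in at_top. has_indep_sols k 1 (veronese zeta) X \<eta>)" by (rule hat1_upper[OF k])
    qed
  next
    fix j assume j: "j \<in> {2..k+1}"
    have "Sup {ereal \<eta> | \<eta>. \<forall>\<^sub>F X in at_top. has_indep_sols k j (veronese zeta) X \<eta>} = ereal 0"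
    proof (rule Sup_eq_from)
      fix \<eta> :: real assume e: "\<eta> < 0"
      show "\<forall>\<^sub>F X in at_top. has_indep_sols k j (veronese zeta) X \<eta>"
        by (rule eventually_mono[OF eventually_ge_at_top[of "1::real"]], rule trivial_sols) (use j zb e in auto)
    next
      fix \<eta> :: real assume "\<eta> > 0"
      thus "\<not> (\<forall>\<^sub>F X in at_top. has_indep_sols k j (veronese zeta) X \<eta>)"
        by (intro hatj_upper[OF k]) (use j in auto)
    qed
    thus "lambda_hat_kj k j (veronese zeta) = 0" by (simp add: lambda_hat_kj_def zero_ereal_def)
  qed
  show ?thesis using zeta_cantor part unfolding z by blast
qed

end
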